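(* Assume that the weak Poincaré inequality $$\mu(f^2)\le\beta(r)\,\mathcal E(f,f)+r\|f\|_\infty^2,\qquad r>0,\ f\in\mathcal D(\mathcal E),\ \mu(f)=0,$$ holds for some decreasing function $\beta:(0,\infty)\to(0,\infty)$. If for every $\varepsilon>0$ $$\inf_{n,k\ge1}e^{\tilde Z_n(V)}\beta\big(\varepsilon e^{-\tilde Z_n(V)}\big)\big(\tilde\eta_{n,k}+\tilde\gamma_k+\mu(\rho>n-k)\big)=0,$$ then $$\mu_V(f^2)\le\beta_V(r)\,\mathcal E_V(f,f)+r\|f\|_\infty^2,\qquad r>0,\ f\in\mathcal D(\mathcal E_V),\ \mu_V(f)=0,$$ holds with $$\beta_V(r):=\inf\Big\{2\beta\Big(\frac r8e^{-\tilde Z_n(V)}\Big)e^{\tilde K_{n,k}(V)}:\ n,k\ge1,\ 6\mu_V(\rho>n)+2e^{\tilde Z_n(V)}\beta\Big(\frac r8e^{-\tilde Z_n(V)}\Big)\big(4\tilde\eta_{n,k}+\tilde\gamma_k+4\lambda\mu(\rho>n-k)\big)\le\frac r2\Big\},$$ and $\beta_V(r)<\infty$ for all $r>0$.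
   Context: Setting: $(E,d)$ is a Polish space with Borel $\sigma$-field and a probability measure $\mu$. Let $q:E\times E\to[0,\infty)$ be measurable with $q(x,x)=0$ for all $x$, and $\lambda:=\sup_{x\in E}\int_E(1\wedge d(x,y)^2)q(x,y)\,\mu(\mathrm dy)<\infty.$ For bounded measurable $f,g$ set $\Gamma(f,g)(x)=\int_E(f(x)-f(y))(g(x)-g(y))q(x,y)\mu(\mathrm dy)$; $\mathcal A$ is the set of bounded measurable $f$ with $\Gamma(f,f)$ bounded, assumed dense in $L^2(\mu)$. $(\mathcal E,\mathcal D(\mathcal E))$ is the closure in $L^2(\mu)$ of $\mathcal E(f,g)=\mu(\Gamma(f,g))$ on $\mathcal A$. Fix $o\in E$, $\rho(x)=d(o,x)$. $V$ is a measurable function bounded on each set $\{\rho\le r\}$, $r>0$, with $\mu(e^V)=1$; $\mu_V(\mathrm dx)=e^{V(x)}\mu(\mathrm dx)$, and $(\mathcal E_V,\mathcal D(\mathcal E_V))$ is the closure in $L^2(\mu_V)$ of $\mathcal E_V(f,g)=\mu_V(\Gamma(f,g))$ on $\mathcal A$. $\|f\|_\infty$ is the uniform norm. Notation (for $n,k\ge1$): $\tilde K_{n,k}(V)=\sup_{\rho\le n}V-\inf_{\rho\le n+k+1}V$; $\tilde Z_n(V)=\sup_{\rho\le n}V$; $\tilde\eta_{n,k}=\iint_{\{\rho(x)>n+k+1,\ \rho(y)\le n+1\}}q(x,y)\mu(\mathrm dy)\mu(\mathrm dx)$; $\tilde\gamma_k=\iint_{\{d(x,y)>k\}}q(x,y)\mu(\mathrm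 dy)\mu(\mathrm dx)$. *)

theory Defs
  imports "HOL-Probability.Probability"
begin

definition Gam :: "'a measure \<Rightarrow> ('a \<Rightarrow> 'a \<Rightarrow> real) \<Rightarrow> ('a \<Rightarrow> real) \<Rightarrow> 'a \<Rightarrow> ennreal" where
  "Gam M q f x = (\<integral>\<^sup>+ y. ennreal ((f x - f y)^2 * q x y) \<partial>M)"

definition coreA :: "'a measure \<Rightarrow> ('a \<Rightarrow> 'a \<Rightarrow> real) \<Rightarrow> ('a \<Rightarrow> real) set" where
  "coreA M q = {f \<in> borel_measurable M. bounded (range f) \<and> (\<exists>C::real. \<forall>x. Gam M q f x \<le> ennreal C)}"

definition energy :: "'a measure \<Rightarrow> ('a \<Rightarrow> 'a \<Rightarrow> real) \<Rightarrow> 'a measure \<Rightarrow> ('a \<Rightarrow> real) \<Rightarrow> real" where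
  "energy M q N f = enn2real (\<integral>\<^sup>+ x. Gam M q f x \<partial>N)"

text \<open>fs is an approximating sequence for f in the closure in L^2(N) of the form on the core.\<close>
definition approx_seq :: "'a measure \<Rightarrow> ('a \<Rightarrow> 'a \<Rightarrow> real) \<Rightarrow> 'a measure \<Rightarrow> ('a \<Rightarrow> real) \<Rightarrow> (nat \<Rightarrow> 'a \<Rightarrow> real) \<Rightarrow> bool" where
  "approx_seq M q N f fs \<longleftrightarrow>
     (\<forall>n. fs n \<in> coreA M q) \<and> f \<in> borel_measurable N \<and> integrable N (\<lambda>x. (f x)^2) \<and>
     (\<lambda>n. \<integral>x. (fs n x - f x)^2 \<partial>N) \<longlonglongrightarrow> 0 \<and>
     (\<forall>e>0. \<exists>N0. \<forall>m\<ge>N0. \<forall>n\<ge>N0. energy M q N (\<lambda>x. fs m x - fs n x) < e)"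

definition form_dom :: "'a measure \<Rightarrow> ('a \<Rightarrow> 'a \<Rightarrow> real) \<Rightarrow> 'a measure \<Rightarrow> ('a \<Rightarrow> real) set" where
  "form_dom M q N = {f. \<exists>fs. approx_seq M q N f fs}"

text \<open>Value of the closed form: limit of energies along approximating sequences
  (independent of the sequence by closability).\<close>
definition form_val :: "'a measure \<Rightarrow> ('a \<Rightarrow> 'a \<Rightarrow> real) \<Rightarrow> 'a measure \<Rightarrow> ('a \<Rightarrow> real) \<Rightarrow> real" where
  "form_val M q N f = Inf {e. \<exists>fs. approx_seq M q N f fs \<and> (\<lambda>n. energy M q N (fs n)) \<longlonglongrightarrow> e}"

definition sup_norm :: "('a \<Rightarrow> real) \<Rightarrow> real" where
  "sup_norm f = (SUP x. \<bar>f x\<bar>)"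

text \<open>Weak Poincare inequality for the closed form in L^2(N) with rate function beta.
  Unbounded f are omitted since then the uniform norm is infinite and the inequality trivial.\<close>
definition weak_poincare :: "'a measure \<Rightarrow> ('a \<Rightarrow> 'a \<Rightarrow> real) \<Rightarrow> 'a measure \<Rightarrow> (real \<Rightarrow> real) \<Rightarrow> bool" where
  "weak_poincare M q N \<beta> \<longleftrightarrow>
     (\<forall>r>0. \<forall>f\<in>form_dom M q N. bounded (range f) \<longrightarrow> (\<integral>x. f x \<partial>N) = 0 \<longrightarrow>
        (\<integral>x. (f x)^2 \<partial>N) \<le> \<beta> r * form_val M q N f + r * (sup_norm f)^2)"

definition lam :: "'a::metric_space measure \<Rightarrow> ('a \<Rightarrow> 'a \<Rightarrow> real) \<Rightarrow> ennreal" where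
  "lam M q = (SUP x. \<integral>\<^sup>+ y. ennreal (min 1 ((dist x y)^2) * q x y) \<partial>M)"

definition Zt :: "'a::metric_space \<Rightarrow> ('a \<Rightarrow> real) \<Rightarrow> nat \<Rightarrow> real" where
  "Zt x0 V n = (SUP x\<in>{x. dist x0 x \<le> real n}. V x)"

definition Kt :: "'a::metric_space \<Rightarrow> ('a \<Rightarrow> real) \<Rightarrow> nat \<Rightarrow> nat \<Rightarrow> real" where
  "Kt x0 V n k = Zt x0 V n - (INF x\<in>{x. dist x0 x \<le> real n + real k + 1}. V x)"

definition etat :: "'a::metric_space measure \<Rightarrow> ('a \<Rightarrow> 'a \<Rightarrow> real) \<Rightarrow> 'a \<Rightarrow> nat \<Rightarrow> nat \<Rightarrow> ennreal" where
  "etat M q x0 n k = (\<integral>\<^sup>+ x. \<integral>\<^sup>+ y.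
      (if dist x0 x > real n + real k + 1 \<and> dist x0 y \<le> real n + 1 then ennreal (q x y) else 0) \<partial>M \<partial>M)"

definition gammat :: "'a::metric_space measure \<Rightarrow> ('a \<Rightarrow> 'a \<Rightarrow> real) \<Rightarrow> nat \<Rightarrow> ennreal" where
  "gammat M q k = (\<integral>\<^sup>+ x. \<integral>\<^sup>+ y. (if dist x y > real k then ennreal (q x y) else 0) \<partial>M \<partial>M)"

definition betaV_set :: "'a::metric_space measure \<Rightarrow> ('a \<Rightarrow> 'a \<Rightarrow> real) \<Rightarrow> 'a \<Rightarrow> ('a \<Rightarrow> real)
    \<Rightarrow> (real \<Rightarrow> real) \<Rightarrow> real \<Rightarrow> real set" where
  "betaV_set M q x0 V \<beta> r =
     {2 * \<beta> (r / 8 * exp (- Zt x0 V n)) * exp (Kt x0 V n k) | n k. n \<ge> 1 \<and> k \<ge> 1 \<and>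
        ennreal (6 * measure (density M (\<lambda>x. ennreal (exp (V x)))) {x. dist x0 x > real n})
        + ennreal (2 * exp (Zt x0 V n) * \<beta> (r / 8 * exp (- Zt x0 V n)))
          * (4 * etat M q x0 n k + gammat M q k
             + 4 * lam M q * ennreal (measure M {x. dist x0 x > real n - real k}))
        \<le> ennreal (r / 2)}"

definition betaV :: "'a::metric_space measure \<Rightarrow> ('a \<Rightarrow> 'a \<Rightarrow> real) \<Rightarrow> 'a \<Rightarrow> ('a \<Rightarrow> real)
    \<Rightarrow> (real \<Rightarrow> real) \<Rightarrow> real \<Rightarrow> real" where
  "betaV M q x0 V \<beta> r = Inf (betaV_set M q x0 V \<beta> r)"

end

theory Submission
  imports Defs
begin


locale setting =
  fixes M :: "'a::polish_space measure"
    and q :: "'a \<Rightarrow> 'a \<Rightarrow> real"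
    and x0 :: 'a
    and V :: "'a \<Rightarrow> real"
    and \<beta> :: "real \<Rightarrow> real"
  assumes M_borel: "sets M = sets borel"
    and M_prob: "prob_space M"
    and q_meas: "(\<lambda>(x, y). q x y) \<in> borel_measurable (M \<Otimes>\<^sub>M M)"
    and q_nonneg: "\<And>x y. q x y \<ge> 0"
    and lam_fin: "lam M q < \<infinity>"
    and V_meas: "V \<in> borel_measurable M"
    and V_loc_bdd: "\<And>r. r > 0 \<Longrightarrow> \<exists>C. \<forall>x. dist x0 x \<le> r \<longrightarrow> \<bar>V x\<bar> \<le> C"
    and V_norm: "(\<integral>\<^sup>+ x. ennreal (exp (V x)) \<partial>M) = 1"
    and \<beta>_pos: "\<And>r. r > 0 \<Longrightarrow> \<beta> r > 0"
    and \<beta>_decr: "\<And>s t. 0 < s \<Longrightarrow> s \<le> t \<Longrightarrow> \<beta> t \<le> \<beta> s"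
    and WPI: "weak_poincare M q M \<beta>"
begin

abbreviation "N \<equiv> density M (\<lambda>x. ennreal (exp (V x)))"

lemma space_M[simp]: "space M = UNIV"
  using sets_eq_imp_space_eq[OF M_borel] by simp

lemma sets_N: "sets N = sets M" by simp

lemma space_N[simp]: "space N = UNIV" by simp

lemma prob_N: "prob_space N"
proof
  show "emeasure N (space N) = 1"
    using V_norm V_meas sets.top[of M]
    by (subst emeasure_density) (auto simp: indicator_def)
qed

lemma prob_M: "prob_space M" by (rule M_prob)

lemma meas_M: "f \<in> borel_measurable borel \<Longrightarrow> f \<in> borel_measurable M"
  by (metis measurable_cong_sets[OF M_borel refl])

lemma meas_N: "f \<in> borel_measurable M \<Longrightarrow> f \<in> borel_measurable N"
  by simp

lemma sets_MM: "sets (M \<Otimes>\<^sub>M M) = sets (borel \<Otimes>\<^sub>M borel)"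
  using M_borel by (intro sets_pair_measure_cong) auto

lemma rho_meas[measurable]: "(\<lambda>x. dist x0 x) \<in> borel_measurable M"
  by (intro meas_M) measurable

lemma q_meas'[measurable]: "(\<lambda>p. q (fst p) (snd p)) \<in> borel_measurable (M \<Otimes>\<^sub>M M)"
  using q_meas by (simp add: case_prod_beta')

lemma dist_meas2[measurable]: "(\<lambda>p. dist (fst p) (snd p)) \<in> borel_measurable (M \<Otimes>\<^sub>M M)"
proof -
  have "(\<lambda>p. dist (fst p) (snd p)) \<in> borel_measurable (borel \<Otimes>\<^sub>M borel :: ('a\<times>'a) measure)"
    by measurable
  then show ?thesis by (metis measurable_cong_sets[OF sets_MM refl])
qed

lemma sfM: "sigma_finite_measure M"
  using prob_M by (simp add: prob_space_imp_sigma_finite)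

lemma Gam_meas[measurable]: assumes [measurable]: "u \<in> borel_measurable M"
  shows "Gam M q u \<in> borel_measurable M"
proof -
  have "(\<lambda>(x,y). ennreal ((u x - u y)^2 * q x y)) \<in> borel_measurable (M \<Otimes>\<^sub>M M)"
    by measurable
  then show ?thesis unfolding Gam_def
    by (rule sigma_finite_measure.borel_measurable_nn_integral[OF sfM])
qed


end

definition cutf :: "'a::metric_space \<Rightarrow> nat \<Rightarrow> nat \<Rightarrow> 'a \<Rightarrow> real" where
  "cutf x0 n k x = min 1 (max 0 ((real n + real k - dist x0 x) / real k))"

lemma cutf_bounds: "0 \<le> cutf x0 n k x" "cutf x0 n k x \<le> 1"
  unfolding cutf_def by auto

lemma cutf_one: "k \<ge> 1 \<Longrightarrow> dist x0 x \<le> real n \<Longrightarrow> cutf x0 n k x = 1"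
  unfolding cutf_def by (auto simp: field_simps)

lemma cutf_zero: "k \<ge> 1 \<Longrightarrow> dist x0 x \<ge> real n + real k \<Longrightarrow> cutf x0 n k x = 0"
  unfolding cutf_def by (auto simp: field_simps)

lemma cutf_lip: assumes "k \<ge> 1"
  shows "\<bar>cutf x0 n k x - cutf x0 n k y\<bar> \<le> dist x y / real k"
proof -
  have kp: "real k > 0" using assms by simp
  have "\<bar>(real n + real k - dist x0 x) / real k - (real n + real k - dist x0 y) / real k\<bar>
        = \<bar>dist x0 y - dist x0 x\<bar> / real k"
  proof -
    have "(real n + real k - dist x0 x) / real k - (real n + real k - dist x0 y) / real k
       = (dist x0 y - dist x0 x) / real k" using kp by (simp add: field_simps)
    then show ?thesis by (simp add: abs_divide)
  qed
  also have "\<dots> \<le> dist x y / real k"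
  proof (intro divide_right_mono)
    show "\<bar>dist x0 y - dist x0 x\<bar> \<le> dist x y"
      using dist_triangle[of x0 y x] dist_triangle[of x0 x y] dist_commute[of x y] by linarith
  qed simp
  finally have "\<bar>(real n + real k - dist x0 x) / real k - (real n + real k - dist x0 y) / real k\<bar>
        \<le> dist x y / real k" .
  then show ?thesis unfolding cutf_def by (simp add: abs_le_iff) linarith
qed

lemma cutf_sq: assumes "k \<ge> 1"
  shows "(cutf x0 n k x - cutf x0 n k y)^2 \<le> min 1 ((dist x y)^2)"
proof -
  let ?d = "cutf x0 n k x - cutf x0 n k y"
  have a: "\<bar>?d\<bar> \<le> 1" using cutf_bounds[of x0 n k x] cutf_bounds[of x0 n k y] by auto
  have "\<bar>?d\<bar> \<le> dist x y / real k" by (rule cutf_lip[OF assms])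
  also have "\<dots> \<le> dist x y" using assms by (simp add: divide_le_eq mult_le_cancel_left1)
  finally have b: "\<bar>?d\<bar> \<le> dist x y" .
  have "?d^2 \<le> 1" using a by (simp add: abs_square_le_1)
  moreover have "?d^2 \<le> (dist x y)^2" using b by (metis abs_ge_zero power2_abs power_mono)
  ultimately show ?thesis by simp
qed

context setting begin

lemma cutf_meas[measurable]: "cutf x0 n k \<in> borel_measurable M"
  unfolding cutf_def by measurable


lemma cutf_pt: assumes k: "k \<ge> 1"
  shows "(cutf x0 n k x - cutf x0 n k y)^2 * q x y \<le>
     (if dist x y > real k then q x y else 0) +
     (if dist x0 x > real n - real k then min 1 ((dist x y)^2) * q x y else 0)"
proof -
  have sq: "(cutf x0 n k x - cutf x0 n k y)^2 \<le> min 1 ((dist x y)^2)" by (rule cutf_sq[OF k])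
  have q0: "q x y \<ge> 0" by (rule q_nonneg)
  have m0: "0 \<le> min 1 ((dist x y)^2) * q x y" using q0 by simp
  show ?thesis
  proof (cases "dist x y > real k")
    case True
    have "(cutf x0 n k x - cutf x0 n k y)^2 * q x y \<le> 1 * q x y"
      using sq q0 by (intro mult_right_mono) auto
    then show ?thesis using True m0 by auto
  next
    case False
    show ?thesis
    proof (cases "dist x0 x > real n - real k")
      case True
      have "(cutf x0 n k x - cutf x0 n k y)^2 * q x y \<le> min 1 ((dist x y)^2) * q x y"
        using sq q0 by (intro mult_right_mono) auto
      then show ?thesis using True False by auto
    next
      case F2: False
      have "dist x0 y \<le> dist x0 x + dist x y" by (rule dist_triangle)
      then have "dist x0 y \<le> real n" using F2 False by linarith
      moreover have "dist x0 x \<le> real n" using F2 k by linarith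
      ultimately have "cutf x0 n k x = 1" "cutf x0 n k y = 1" using cutf_one[OF k] by auto
      then show ?thesis using q0 False F2 by simp
    qed
  qed
qed

lemma id_meas[measurable]: "(\<lambda>x. x) \<in> M \<rightarrow>\<^sub>M borel"
  by (rule meas_M) simp

lemma set_M[measurable]: assumes [measurable]: "Measurable.pred M P" shows "{x. P x} \<in> sets M"
proof -
  have "{x \<in> space M. P x} \<in> sets M" by measurable
  then show ?thesis by simp
qed

lemma lam_bound: "(\<integral>\<^sup>+y. ennreal (min 1 ((dist x y)^2) * q x y) \<partial>M) \<le> lam M q"
  unfolding lam_def by (rule SUP_upper) simp

lemma q_meas_y[measurable]: "q x \<in> borel_measurable M"
  using measurable_Pair2[OF q_meas, of x] sets.top[of M] by (simp add: case_prod_beta')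

lemma T_bound: assumes k: "k \<ge> 1"
  shows "(\<integral>\<^sup>+x. \<integral>\<^sup>+y. ennreal ((cutf x0 n k x - cutf x0 n k y)^2 * q x y) \<partial>M \<partial>M)
     \<le> gammat M q k + lam M q * ennreal (measure M {x. dist x0 x > real n - real k})"
proof -
  let ?A = "\<lambda>x y. (if dist x y > real k then ennreal (q x y) else 0)"
  let ?B = "\<lambda>x. (if dist x0 x > real n - real k then lam M q else 0)"
  have "(\<integral>\<^sup>+x. \<integral>\<^sup>+y. ennreal ((cutf x0 n k x - cutf x0 n k y)^2 * q x y) \<partial>M \<partial>M)
      \<le> (\<integral>\<^sup>+x. (\<integral>\<^sup>+y. ?A x y \<partial>M) + ?B x \<partial>M)"
  proof (rule nn_integral_mono)
    fix x
    have "(\<integral>\<^sup>+y. ennreal ((cutf x0 n k x - cutf x0 n k y)^2 * q x y) \<partial>M)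
        \<le> (\<integral>\<^sup>+y. ?A x y + (if dist x0 x > real n - real k then
               ennreal (min 1 ((dist x y)^2) * q x y) else 0) \<partial>M)"
    proof (rule nn_integral_mono)
      fix y
      have "ennreal ((cutf x0 n k x - cutf x0 n k y)^2 * q x y) \<le>
         ennreal ((if dist x y > real k then q x y else 0) +
     (if dist x0 x > real n - real k then min 1 ((dist x y)^2) * q x y else 0))"
        by (rule ennreal_leI[OF cutf_pt[OF k]])
      also have "\<dots> = ?A x y + (if dist x0 x > real n - real k then
               ennreal (min 1 ((dist x y)^2) * q x y) else 0)"
        using q_nonneg[of x y] by (auto simp: ennreal_plus)
      finally show "ennreal ((cutf x0 n k x - cutf x0 n k y)^2 * q x y) \<le> \<dots>" .
    qed
    also have "\<dots> = (\<integral>\<^sup>+y. ?A x y \<partial>M) + (\<integral>\<^sup>+y. (if dist x0 x > real n - real k then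
               ennreal (min 1 ((dist x y)^2) * q x y) else 0) \<partial>M)"
      by (rule nn_integral_add) measurable
    also have "\<dots> \<le> (\<integral>\<^sup>+y. ?A x y \<partial>M) + ?B x"
      using lam_bound[of x] by (intro add_left_mono) auto
    finally show "(\<integral>\<^sup>+y. ennreal ((cutf x0 n k x - cutf x0 n k y)^2 * q x y) \<partial>M)
        \<le> (\<integral>\<^sup>+y. ?A x y \<partial>M) + ?B x" .
  qed
  also have "\<dots> = (\<integral>\<^sup>+x. \<integral>\<^sup>+y. ?A x y \<partial>M \<partial>M) + (\<integral>\<^sup>+x. ?B x \<partial>M)"
  proof (rule nn_integral_add)
    have "(\<lambda>(x,y). ?A x y) \<in> borel_measurable (M \<Otimes>\<^sub>M M)" by measurable
    then show "(\<lambda>x. \<integral>\<^sup>+y. ?A x y \<partial>M) \<in> borel_measurable M"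
      by (rule sigma_finite_measure.borel_measurable_nn_integral[OF sfM])
  qed measurable
  also have "(\<integral>\<^sup>+x. ?B x \<partial>M) = lam M q * emeasure M {x. dist x0 x > real n - real k}"
  proof -
    have "(\<integral>\<^sup>+x. ?B x \<partial>M) = (\<integral>\<^sup>+x. lam M q * indicator {x. dist x0 x > real n - real k} x \<partial>M)"
      by (intro nn_integral_cong) (auto simp: indicator_def)
    also have "\<dots> = lam M q * emeasure M {x. dist x0 x > real n - real k}"
      by (subst nn_integral_cmult_indicator) auto
    finally show ?thesis .
  qed
  also have "emeasure M {x. dist x0 x > real n - real k} = ennreal (measure M {x. dist x0 x > real n - real k})"
    using prob_M by (intro finite_measure.emeasure_eq_measure) (simp add: prob_space_def)
  finally show ?thesis unfolding gammat_def by simp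
qed


lemma Gam_shift: "Gam M q (\<lambda>x. u x - m) = Gam M q u"
  unfolding Gam_def by (intro ext) simp

lemma sq_sum_le: fixes u v :: real shows "(u + v)^2 \<le> 2 * u^2 + 2 * v^2"
proof -
  have "0 \<le> (u - v)^2" by simp
  then show ?thesis unfolding power2_sum power2_diff by linarith
qed

lemma prod_pt: fixes a b p p' c0 Q :: real assumes "\<bar>b\<bar> \<le> c0" "0 \<le> Q"
  shows "(a * p - b * p')^2 * Q \<le> 2 * p^2 * ((a - b)^2 * Q) + 2 * c0^2 * ((p - p')^2 * Q)"
proof -
  have e: "a * p - b * p' = p * (a - b) + b * (p - p')" by (simp add: algebra_simps)
  have b2: "b^2 \<le> c0^2" using assms(1) power_mono[of "\<bar>b\<bar>" c0 2] by simp
  have "(a * p - b * p')^2 \<le> 2 * (p * (a - b))^2 + 2 * (b * (p - p'))^2"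
    unfolding e by (rule sq_sum_le)
  also have "(b * (p - p'))^2 \<le> c0^2 * (p - p')^2"
    unfolding power_mult_distrib using b2 by (intro mult_right_mono) auto
  finally have "(a * p - b * p')^2 \<le> 2 * p^2 * (a - b)^2 + 2 * c0^2 * (p - p')^2"
    by (simp add: power_mult_distrib)
  then have "(a * p - b * p')^2 * Q \<le> (2 * p^2 * (a - b)^2 + 2 * c0^2 * (p - p')^2) * Q"
    using assms by (intro mult_right_mono) auto
  then show ?thesis by (simp add: algebra_simps)
qed

lemma Gam_prod: assumes hm[measurable]: "h \<in> borel_measurable M" and hb: "\<And>y. \<bar>h y\<bar> \<le> c0"
  shows "Gam M q (\<lambda>x. h x * cutf x0 n k x) x \<le> ennreal (2 * (cutf x0 n k x)^2) * Gam M q h x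
     + ennreal (2 * c0^2) * (\<integral>\<^sup>+y. ennreal ((cutf x0 n k x - cutf x0 n k y)^2 * q x y) \<partial>M)"
proof -
  have "Gam M q (\<lambda>x. h x * cutf x0 n k x) x \<le> (\<integral>\<^sup>+y. ennreal (2 * (cutf x0 n k x)^2) * ennreal ((h x - h y)^2 * q x y)
     + ennreal (2 * c0^2) * ennreal ((cutf x0 n k x - cutf x0 n k y)^2 * q x y) \<partial>M)"
    unfolding Gam_def
  proof (rule nn_integral_mono)
    fix y
    have "ennreal ((h x * cutf x0 n k x - h y * cutf x0 n k y)^2 * q x y) \<le>
      ennreal (2 * (cutf x0 n k x)^2 * ((h x - h y)^2 * q x y) + 2 * c0^2 * ((cutf x0 n k x - cutf x0 n k y)^2 * q x y))"
      by (intro ennreal_leI prod_pt hb q_nonneg)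
    also have "\<dots> = ennreal (2 * (cutf x0 n k x)^2) * ennreal ((h x - h y)^2 * q x y)
     + ennreal (2 * c0^2) * ennreal ((cutf x0 n k x - cutf x0 n k y)^2 * q x y)"
      using q_nonneg[of x y] by (simp add: ennreal_plus ennreal_mult)
    finally show "ennreal ((h x * cutf x0 n k x - h y * cutf x0 n k y)^2 * q x y) \<le> \<dots>" .
  qed
  also have "\<dots> = ennreal (2 * (cutf x0 n k x)^2) * Gam M q h x
     + ennreal (2 * c0^2) * (\<integral>\<^sup>+y. ennreal ((cutf x0 n k x - cutf x0 n k y)^2 * q x y) \<partial>M)"
    unfolding Gam_def by (subst nn_integral_add) (auto simp: nn_integral_cmult)
  finally show ?thesis .
qed

definition trunc :: "real \<Rightarrow> real \<Rightarrow> real" where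
  "trunc c t = max (- c) (min c t)"

lemma trunc_lip: "\<bar>trunc c a - trunc c b\<bar> \<le> \<bar>a - b\<bar>"
  unfolding trunc_def by (auto simp: abs_le_iff max_def min_def)

lemma Gam_trunc: "Gam M q (\<lambda>x. trunc c (u x)) x \<le> Gam M q u x"
  unfolding Gam_def
proof (rule nn_integral_mono)
  fix y
  have "(trunc c (u x) - trunc c (u y))^2 \<le> (u x - u y)^2"
    using trunc_lip[of c "u x" "u y"] by (metis abs_ge_zero power2_abs power_mono)
  then show "ennreal ((trunc c (u x) - trunc c (u y))^2 * q x y) \<le> ennreal ((u x - u y)^2 * q x y)"
    using q_nonneg[of x y] by (intro ennreal_leI mult_right_mono) auto
qed


lemma int_M: fixes f :: "'a \<Rightarrow> real" shows "f \<in> borel_measurable M \<Longrightarrow> (\<And>x. \<bar>f x\<bar> \<le> B) \<Longrightarrow> integrable M f"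
  using prob_M by (intro finite_measure.integrable_const_bound[where B=B])
    (auto simp: prob_space_def)

lemma int_N: fixes f :: "'a \<Rightarrow> real" shows "f \<in> borel_measurable M \<Longrightarrow> (\<And>x. \<bar>f x\<bar> \<le> B) \<Longrightarrow> integrable N f"
  using prob_N by (intro finite_measure.integrable_const_bound[where B=B])
    (auto simp: prob_space_def)

lemma energy_nonneg: "energy M q P u \<ge> 0"
  unfolding energy_def by simp

lemma energy_zero: "energy M q P (\<lambda>x. 0) = 0"
  unfolding energy_def Gam_def by simp

lemma form_val_le: assumes "g \<in> coreA M q" "integrable M (\<lambda>x. (g x)^2)"
  shows "g \<in> form_dom M q M" "form_val M q M g \<le> energy M q M g"
proof -
  have gm: "g \<in> borel_measurable M" using assms unfolding coreA_def by auto
  have ap: "approx_seq M q M g (\<lambda>_. g)"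
    unfolding approx_seq_def using assms gm by (simp add: energy_zero)
  then show "g \<in> form_dom M q M" unfolding form_dom_def by auto
  show "form_val M q M g \<le> energy M q M g"
    unfolding form_val_def
  proof (rule cInf_lower)
    show "energy M q M g \<in> {e. \<exists>fs. approx_seq M q M g fs \<and> (\<lambda>n. energy M q M (fs n)) \<longlonglongrightarrow> e}"
      using ap by auto
    show "bdd_below {e. \<exists>fs. approx_seq M q M g fs \<and> (\<lambda>n. energy M q M (fs n)) \<longlonglongrightarrow> e}"
      unfolding bdd_below_def
      by (rule exI[of _ 0]) (auto intro!: LIMSEQ_le_const simp: energy_nonneg)
  qed
qed

lemma sup_norm_le: assumes "\<And>x. \<bar>g x\<bar> \<le> B" shows "sup_norm g \<le> B" "0 \<le> sup_norm g"
proof -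
  show "sup_norm g \<le> B" unfolding sup_norm_def by (rule cSUP_least) (use assms in auto)
  have "\<bar>g undefined\<bar> \<le> sup_norm g" unfolding sup_norm_def
    by (rule cSUP_upper) (use assms in \<open>auto simp: bdd_above_def\<close>)
  then show "0 \<le> sup_norm g" by linarith
qed

lemma wpi_core: assumes g: "g \<in> coreA M q" and gb: "\<And>x. \<bar>g x\<bar> \<le> B"
  and g0: "(\<integral>x. g x \<partial>M) = 0" and s: "s > 0"
  shows "(\<integral>x. (g x)^2 \<partial>M) \<le> \<beta> s * energy M q M g + s * B^2"
proof -
  have gm[measurable]: "g \<in> borel_measurable M" using g unfolding coreA_def by auto
  have gi: "integrable M (\<lambda>x. (g x)^2)"
  proof (rule int_M[where B="B^2"])
    fix x show "\<bar>(g x)^2\<bar> \<le> B^2" using power_mono[OF gb[of x] abs_ge_zero, of 2] by simp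
  qed measurable
  have rb: "bounded (range g)" using g unfolding coreA_def by auto
  from form_val_le[OF g gi] have fd: "g \<in> form_dom M q M" and fv: "form_val M q M g \<le> energy M q M g" .
  have "(\<integral>x. (g x)^2 \<partial>M) \<le> \<beta> s * form_val M q M g + s * (sup_norm g)^2"
    using WPI s fd rb g0 unfolding weak_poincare_def by blast
  also have "\<dots> \<le> \<beta> s * energy M q M g + s * B^2"
  proof (intro add_mono mult_left_mono)
    show "(sup_norm g)^2 \<le> B^2" using sup_norm_le[of g B, OF gb] power_mono[of "sup_norm g" B 2] by auto
  qed (use fv \<beta>_pos[OF s] s in auto)
  finally show ?thesis .
qed


lemma V_bdd: assumes "R > 0"
  shows "bdd_above (V ` {x. dist x0 x \<le> R})" "bdd_below (V ` {x. dist x0 x \<le> R})"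
proof -
  obtain C where C: "\<And>x. dist x0 x \<le> R \<Longrightarrow> \<bar>V x\<bar> \<le> C" using V_loc_bdd[OF assms] by blast
  show "bdd_above (V ` {x. dist x0 x \<le> R})" unfolding bdd_above_def
    using C by (intro exI[of _ C]) (auto simp: abs_le_iff)
  show "bdd_below (V ` {x. dist x0 x \<le> R})" unfolding bdd_below_def
    using C by (intro exI[of _ "-C"]) (force simp: abs_le_iff)
qed

lemma V_le_Z: "n \<ge> 1 \<Longrightarrow> dist x0 x \<le> real n \<Longrightarrow> V x \<le> Zt x0 V n"
  unfolding Zt_def by (rule cSUP_upper) (auto intro: V_bdd)

lemma I_le_V: "dist x0 x \<le> real n + real k + 1 \<Longrightarrow>
   (INF x\<in>{x. dist x0 x \<le> real n + real k + 1}. V x) \<le> V x"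
  by (rule cINF_lower) (auto intro: V_bdd)

lemma core_parts: assumes "h \<in> coreA M q"
  shows "h \<in> borel_measurable M" "bounded (range h)" "\<exists>C\<ge>0. \<forall>x. Gam M q h x \<le> ennreal C"
proof -
  show "h \<in> borel_measurable M" "bounded (range h)" using assms unfolding coreA_def by auto
  obtain C where "\<forall>x. Gam M q h x \<le> ennreal C" using assms unfolding coreA_def by auto
  then show "\<exists>C\<ge>0. \<forall>x. Gam M q h x \<le> ennreal C"
    by (intro exI[of _ "max C 0"]) (auto intro: order_trans ennreal_leI)
qed

lemma GamN_fin: assumes "h \<in> coreA M q"
  shows "(\<integral>\<^sup>+x. Gam M q h x \<partial>N) = ennreal (energy M q N h)"
proof -
  obtain C where C: "C \<ge> 0" "\<And>x. Gam M q h x \<le> ennreal C" using core_parts(3)[OF assms] by auto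
  have "(\<integral>\<^sup>+x. Gam M q h x \<partial>N) \<le> (\<integral>\<^sup>+x. ennreal C \<partial>N)"
    by (intro nn_integral_mono C)
  also have "\<dots> = ennreal C" using prob_space.emeasure_space_1[OF prob_N] by simp
  finally show ?thesis unfolding energy_def
    by (metis ennreal_enn2real ennreal_less_top order_le_less_trans top.not_eq_extremum)
qed

lemma energy_g: assumes h: "h \<in> coreA M q" and hb: "\<And>x. \<bar>h x\<bar> \<le> c0"
  and n: "n \<ge> 1" and k: "k \<ge> 1"
  and Tfin: "(\<integral>\<^sup>+x. \<integral>\<^sup>+y. ennreal ((cutf x0 n k x - cutf x0 n k y)^2 * q x y) \<partial>M \<partial>M) = ennreal t"
  and t0: "t \<ge> 0" and c0: "c0 \<ge> 0"
  shows "energy M q M (\<lambda>x. h x * cutf x0 n k x - m) \<le>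
    2 * exp (- (INF x\<in>{x. dist x0 x \<le> real n + real k + 1}. V x)) * energy M q N h + 2 * c0^2 * t"
proof -
  let ?I = "(INF x\<in>{x. dist x0 x \<le> real n + real k + 1}. V x)"
  let ?p = "cutf x0 n k"
  let ?inner = "\<lambda>x. \<integral>\<^sup>+y. ennreal ((?p x - ?p y)^2 * q x y) \<partial>M"
  have hm[measurable]: "h \<in> borel_measurable M" using core_parts[OF h] by auto
  have inner_m[measurable]: "?inner \<in> borel_measurable M"
  proof -
    have "(\<lambda>(x,y). ennreal ((?p x - ?p y)^2 * q x y)) \<in> borel_measurable (M \<Otimes>\<^sub>M M)" by measurable
    then show ?thesis by (rule sigma_finite_measure.borel_measurable_nn_integral[OF sfM])
  qed
  have "(\<integral>\<^sup>+x. Gam M q (\<lambda>x. h x * ?p x - m) x \<partial>M) = (\<integral>\<^sup>+x. Gam M q (\<lambda>x. h x * ?p x) x \<partial>M)"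
    by (simp add: Gam_shift)
  also have "\<dots> \<le> (\<integral>\<^sup>+x. ennreal (2 * (?p x)^2) * Gam M q h x + ennreal (2 * c0^2) * ?inner x \<partial>M)"
    by (intro nn_integral_mono Gam_prod[OF hm hb])
  also have "\<dots> = (\<integral>\<^sup>+x. ennreal (2 * (?p x)^2) * Gam M q h x \<partial>M) + ennreal (2 * c0^2) * ennreal t"
    by (subst nn_integral_add) (auto simp: nn_integral_cmult Tfin)
  also have "(\<integral>\<^sup>+x. ennreal (2 * (?p x)^2) * Gam M q h x \<partial>M) \<le>
      (\<integral>\<^sup>+x. ennreal (2 * exp (- ?I)) * (ennreal (exp (V x)) * Gam M q h x) \<partial>M)"
  proof (rule nn_integral_mono)
    fix x
    have "2 * (?p x)^2 \<le> 2 * exp (- ?I) * exp (V x)"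
    proof (cases "?p x = 0")
      case True then show ?thesis by simp
    next
      case False
      then have "dist x0 x < real n + real k" using cutf_zero[of k n x0 x, OF k] by linarith
      then have "?I \<le> V x" by (intro I_le_V) simp
      then have "1 \<le> exp (- ?I) * exp (V x)" by (simp add: exp_add[symmetric])
      moreover have "(?p x)^2 \<le> 1" using cutf_bounds[of x0 n k x] by (simp add: power_le_one)
      ultimately show ?thesis by linarith
    qed
    then have "ennreal (2 * (?p x)^2) \<le> ennreal (2 * exp (- ?I)) * ennreal (exp (V x))"
      by (simp add: ennreal_mult[symmetric])
    then show "ennreal (2 * (?p x)^2) * Gam M q h x \<le> ennreal (2 * exp (- ?I)) * (ennreal (exp (V x)) * Gam M q h x)"
      by (simp add: mult.assoc[symmetric] mult_right_mono)
  qed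
  also have "(\<integral>\<^sup>+x. ennreal (2 * exp (- ?I)) * (ennreal (exp (V x)) * Gam M q h x) \<partial>M)
     = ennreal (2 * exp (- ?I)) * ennreal (energy M q N h)"
  proof -
    have "(\<integral>\<^sup>+x. ennreal (2 * exp (- ?I)) * (ennreal (exp (V x)) * Gam M q h x) \<partial>M)
        = ennreal (2 * exp (- ?I)) * (\<integral>\<^sup>+x. ennreal (exp (V x)) * Gam M q h x \<partial>M)"
      by (rule nn_integral_cmult) (use V_meas in measurable)
    also have "(\<integral>\<^sup>+x. ennreal (exp (V x)) * Gam M q h x \<partial>M) = (\<integral>\<^sup>+x. Gam M q h x \<partial>N)"
      by (rule nn_integral_density[symmetric]) (use V_meas in measurable)
    finally show ?thesis using GamN_fin[OF h] by simp
  qed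
  finally have "(\<integral>\<^sup>+x. Gam M q (\<lambda>x. h x * ?p x - m) x \<partial>M) \<le>
      ennreal (2 * exp (- ?I)) * ennreal (energy M q N h) + ennreal (2 * c0^2) * ennreal t"
    by (simp add: add_right_mono)
  also have "\<dots> = ennreal (2 * exp (- ?I) * energy M q N h + 2 * c0^2 * t)"
    using t0 energy_nonneg[of N h] by (simp add: ennreal_plus ennreal_mult)
  finally show ?thesis unfolding energy_def
    by (rule enn2real_leI[rotated]) (use t0 energy_nonneg[of N h] in simp)
qed


end


context setting begin

lemma expV_int: "integrable M (\<lambda>x. exp (V x))"
proof (rule integrableI_bounded)
  show "(\<lambda>x. exp (V x)) \<in> borel_measurable M" using V_meas by measurable
  show "(\<integral>\<^sup>+ x. ennreal (norm (exp (V x))) \<partial>M) < \<infinity>" using V_norm by simp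
qed

lemma intN_eq: assumes [measurable]: "f \<in> borel_measurable M"
  shows "(\<integral>x. f x \<partial>N) = (\<integral>x. exp (V x) * f x \<partial>M)"
proof -
  have "(\<lambda>x. exp (V x)) \<in> borel_measurable M" using V_meas by measurable
  then show ?thesis using integral_density[of f M "\<lambda>x. exp (V x)"] by simp
qed

lemma measN_eq: assumes "A \<in> sets M"
  shows "measure N A = (\<integral>x. exp (V x) * indicator A x \<partial>M)"
proof -
  have im: "(\<lambda>x. indicator A x :: real) \<in> borel_measurable M"
    using assms by (rule borel_measurable_indicator)
  have "(\<integral>x. indicator A x \<partial>N) = measure N A"
    using Bochner_Integration.integral_indicator[of N A] space_N by (metis Int_UNIV_right)
  then show ?thesis using intN_eq[OF im] by simp
qed

lemma var_split: assumes hm[measurable]: "h \<in> borel_measurable M" and hb: "\<And>x. \<bar>h x\<bar> \<le> c0"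
  and mb: "\<bar>m\<bar> \<le> c0" and n: "n \<ge> 1" and k: "k \<ge> 1"
  shows "(\<integral>x. (h x)^2 \<partial>N) - (\<integral>x. h x \<partial>N)^2 \<le>
     exp (Zt x0 V n) * (\<integral>x. (h x * cutf x0 n k x - m)^2 \<partial>M)
     + 4 * c0^2 * measure N {x. dist x0 x > real n}"
proof -
  let ?p = "cutf x0 n k"
  let ?A = "{x. dist x0 x > real n}"
  have c0: "c0 \<ge> 0" using hb[of undefined] by linarith
  interpret PN: prob_space N by (rule prob_N)
  have ih: "integrable N h" by (rule int_N[OF hm hb])
  have ih2: "integrable N (\<lambda>x. (h x)^2)"
  proof (rule int_N[where B="c0^2"])
    fix x show "\<bar>(h x)^2\<bar> \<le> c0^2" using power_mono[of "\<bar>h x\<bar>" c0 2] hb[of x] by simp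
  qed measurable
  have "(\<integral>x. (h x - m)^2 \<partial>N) = (\<integral>x. (h x)^2 - 2 * m * h x + m^2 \<partial>N)"
    by (rule Bochner_Integration.integral_cong) (auto simp: power2_diff algebra_simps)
  also have "\<dots> = (\<integral>x. (h x)^2 \<partial>N) - 2 * m * (\<integral>x. h x \<partial>N) + m^2"
    using ih ih2 PN.prob_space by simp
  finally have e1: "(\<integral>x. (h x - m)^2 \<partial>N) = (\<integral>x. (h x)^2 \<partial>N) - 2 * m * (\<integral>x. h x \<partial>N) + m^2" .
  have i1: "integrable M (\<lambda>x. (h x * ?p x - m)^2)"
  proof (rule int_M[where B="(2*c0)^2"])
    fix x
    have "\<bar>h x * ?p x\<bar> \<le> c0" using hb[of x] cutf_bounds[of x0 n k x]
      using mult_mono[of "\<bar>h x\<bar>" c0 "\<bar>?p x\<bar>" 1] c0 by (simp add: abs_mult)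
    then have "\<bar>h x * ?p x - m\<bar> \<le> 2 * c0" using mb by linarith
    then show "\<bar>(h x * ?p x - m)^2\<bar> \<le> (2*c0)^2" using power_mono[of "\<bar>h x * ?p x - m\<bar>" "2*c0" 2] by simp
  qed measurable
  have i2: "integrable M (\<lambda>x. exp (V x) * indicator ?A x)"
    by (rule integrable_real_mult_indicator) (use expV_int in measurable)
  have "(\<integral>x. (h x)^2 \<partial>N) - (\<integral>x. h x \<partial>N)^2 = (\<integral>x. (h x - m)^2 \<partial>N) - ((\<integral>x. h x \<partial>N) - m)^2"
    unfolding e1 by (simp add: power2_diff)
  also have "\<dots> \<le> (\<integral>x. (h x - m)^2 \<partial>N)" by simp
  also have "\<dots> = (\<integral>x. exp (V x) * (h x - m)^2 \<partial>M)" by (rule intN_eq) measurable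
  also have "\<dots> \<le> (\<integral>x. exp (Zt x0 V n) * (h x * ?p x - m)^2 + 4 * c0^2 * (exp (V x) * indicator ?A x) \<partial>M)"
  proof (rule integral_mono')
    show "integrable M (\<lambda>x. exp (Zt x0 V n) * (h x * ?p x - m)^2 + 4 * c0^2 * (exp (V x) * indicator ?A x))"
      using i1 i2 by (intro Bochner_Integration.integrable_add integrable_mult_right)
    fix x
    show "0 \<le> exp (Zt x0 V n) * (h x * ?p x - m)^2 + 4 * c0^2 * (exp (V x) * indicator ?A x)"
      by (simp add: indicator_def)
    show "exp (V x) * (h x - m)^2 \<le> exp (Zt x0 V n) * (h x * ?p x - m)^2 + 4 * c0^2 * (exp (V x) * indicator ?A x)"
    proof (cases "dist x0 x > real n")
      case True
      have "\<bar>h x - m\<bar> \<le> 2 * c0" using hb[of x] mb by linarith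
      then have "(h x - m)^2 \<le> 4 * c0^2" using power_mono[of "\<bar>h x - m\<bar>" "2*c0" 2] by simp
      then have "exp (V x) * (h x - m)^2 \<le> 4 * c0^2 * exp (V x)" by simp
      moreover have "4 * c0^2 * (exp (V x) * indicator ?A x) = 4 * c0^2 * exp (V x)"
        using True by (simp add: indicator_def)
      moreover have "0 \<le> exp (Zt x0 V n) * (h x * ?p x - m)^2" by simp
      ultimately show ?thesis by linarith
    next
      case False
      then have "?p x = 1" by (intro cutf_one k) simp
      moreover have "V x \<le> Zt x0 V n" using False by (intro V_le_Z n) simp
      ultimately show ?thesis using False by (simp add: indicator_def mult_right_mono)
    qed
  qed
  also have "\<dots> = exp (Zt x0 V n) * (\<integral>x. (h x * ?p x - m)^2 \<partial>M) + 4 * c0^2 * (\<integral>x. exp (V x) * indicator ?A x \<partial>M)"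
    using i1 i2 by simp
  also have "(\<integral>x. exp (V x) * indicator ?A x \<partial>M) = measure N ?A"
    by (rule measN_eq[symmetric]) measurable
  finally show ?thesis .
qed


lemma int_bound_M: fixes f :: "'a \<Rightarrow> real"
  assumes [measurable]: "f \<in> borel_measurable M" and b: "\<And>x. \<bar>f x\<bar> \<le> c"
  shows "\<bar>\<integral>x. f x \<partial>M\<bar> \<le> c"
proof -
  interpret PM: prob_space M by (rule prob_M)
  have i: "integrable M f" by (rule int_M[OF _ b]) simp
  have "\<bar>\<integral>x. f x \<partial>M\<bar> \<le> (\<integral>x. \<bar>f x\<bar> \<partial>M)" by (rule integral_abs_bound)
  also have "\<dots> \<le> (\<integral>x. c \<partial>M)"
  proof (rule integral_mono')
    show "0 \<le> c" using b[of undefined] by linarith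
  qed (use b in auto)
  also have "\<dots> = c" using PM.prob_space by simp
  finally show ?thesis .
qed

lemma lamL: "\<exists>L\<ge>0. lam M q = ennreal L"
  using lam_fin by (metis ennreal_cases ennreal_less_top infinity_ennreal_def less_irrefl)

lemma inner_le_lam: assumes k: "k \<ge> 1"
  shows "(\<integral>\<^sup>+y. ennreal ((cutf x0 n k x - cutf x0 n k y)^2 * q x y) \<partial>M) \<le> lam M q"
proof -
  have "(\<integral>\<^sup>+y. ennreal ((cutf x0 n k x - cutf x0 n k y)^2 * q x y) \<partial>M)
     \<le> (\<integral>\<^sup>+y. ennreal (min 1 ((dist x y)^2) * q x y) \<partial>M)"
    by (intro nn_integral_mono ennreal_leI mult_right_mono cutf_sq k q_nonneg)
  also have "\<dots> \<le> lam M q" by (rule lam_bound)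
  finally show ?thesis .
qed

lemma g_core: assumes h: "h \<in> coreA M q" and hb: "\<And>x. \<bar>h x\<bar> \<le> c0" and k: "k \<ge> 1"
  and mb: "\<bar>m\<bar> \<le> c0"
  shows "(\<lambda>x. h x * cutf x0 n k x - m) \<in> coreA M q" "\<And>x. \<bar>h x * cutf x0 n k x - m\<bar> \<le> 2 * c0"
proof -
  have hm[measurable]: "h \<in> borel_measurable M" using core_parts[OF h] by auto
  obtain C where C: "C \<ge> 0" "\<And>x. Gam M q h x \<le> ennreal C" using core_parts(3)[OF h] by auto
  obtain L where L: "L \<ge> 0" "lam M q = ennreal L" using lamL by auto
  have c0: "c0 \<ge> 0" using hb[of undefined] by linarith
  show gb: "\<bar>h x * cutf x0 n k x - m\<bar> \<le> 2 * c0" for x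
  proof -
    have "\<bar>h x * cutf x0 n k x\<bar> \<le> c0" using hb[of x] cutf_bounds[of x0 n k x]
      using mult_mono[of "\<bar>h x\<bar>" c0 "\<bar>cutf x0 n k x\<bar>" 1] c0 by (simp add: abs_mult)
    then show ?thesis using mb by linarith
  qed
  have "Gam M q (\<lambda>x. h x * cutf x0 n k x - m) x \<le> ennreal (2 * C + 2 * c0^2 * L)" for x
  proof -
    have "Gam M q (\<lambda>x. h x * cutf x0 n k x - m) x = Gam M q (\<lambda>x. h x * cutf x0 n k x) x"
      by (simp add: Gam_shift)
    also have "\<dots> \<le> ennreal (2 * (cutf x0 n k x)^2) * Gam M q h x
     + ennreal (2 * c0^2) * (\<integral>\<^sup>+y. ennreal ((cutf x0 n k x - cutf x0 n k y)^2 * q x y) \<partial>M)"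
      by (rule Gam_prod[OF hm hb])
    also have "\<dots> \<le> ennreal 2 * ennreal C + ennreal (2 * c0^2) * ennreal L"
    proof (intro add_mono mult_mono)
      show "ennreal (2 * (cutf x0 n k x)^2) \<le> ennreal 2"
        using cutf_bounds[of x0 n k x] by (intro ennreal_leI) (simp add: power_le_one)
      show "(\<integral>\<^sup>+y. ennreal ((cutf x0 n k x - cutf x0 n k y)^2 * q x y) \<partial>M) \<le> ennreal L"
        using inner_le_lam[OF k, of n x] L by simp
    qed (use C in auto)
    also have "\<dots> = ennreal (2 * C + 2 * c0^2 * L)"
      using C L by (simp add: ennreal_plus ennreal_mult)
    finally show ?thesis .
  qed
  moreover have "bounded (range (\<lambda>x. h x * cutf x0 n k x - m))"
    unfolding bounded_iff using gb by auto
  ultimately show "(\<lambda>x. h x * cutf x0 n k x - m) \<in> coreA M q"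
    unfolding coreA_def by auto
qed


lemma core_var:
  assumes h: "h \<in> coreA M q" and hb: "\<And>x. \<bar>h x\<bar> \<le> c0" and r: "r > 0"
    and n: "n \<ge> 1" and k: "k \<ge> 1"
    and C: "ennreal (6 * measure N {x. dist x0 x > real n})
        + ennreal (2 * exp (Zt x0 V n) * \<beta> (r / 8 * exp (- Zt x0 V n)))
          * (4 * etat M q x0 n k + gammat M q k
             + 4 * lam M q * ennreal (measure M {x. dist x0 x > real n - real k}))
        \<le> ennreal (r / 2)"
  shows "(\<integral>x. (h x)^2 \<partial>N) - (\<integral>x. h x \<partial>N)^2 \<le>
    2 * \<beta> (r / 8 * exp (- Zt x0 V n)) * exp (Kt x0 V n k) * energy M q N h + r * c0^2"
proof -
  define Z where "Z = Zt x0 V n"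
  define s where "s = r / 8 * exp (- Z)"
  define bb where "bb = \<beta> s"
  define I where "I = (INF x\<in>{x. dist x0 x \<le> real n + real k + 1}. V x)"
  define T where "T = (\<integral>\<^sup>+x. \<integral>\<^sup>+y. ennreal ((cutf x0 n k x - cutf x0 n k y)^2 * q x y) \<partial>M \<partial>M)"
  define muN where "muN = measure N {x. dist x0 x > real n}"
  define E where "E = energy M q N h"
  have s0: "s > 0" unfolding s_def using r by simp
  have bb0: "bb > 0" unfolding bb_def using \<beta>_pos[OF s0] .
  have muN0: "muN \<ge> 0" unfolding muN_def by simp
  have E0: "E \<ge> 0" unfolding E_def by (rule energy_nonneg)
  have c0: "c0 \<ge> 0" using hb[of undefined] by linarith
  have hm[measurable]: "h \<in> borel_measurable M" using core_parts[OF h] by auto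
  let ?G = "gammat M q k" and ?L = "lam M q" and ?mu = "ennreal (measure M {x. dist x0 x > real n - real k})"
  have TB: "T \<le> ?G + ?L * ?mu" unfolding T_def by (rule T_bound[OF k])
  also have "\<dots> \<le> 4 * etat M q x0 n k + ?G + 4 * ?L * ?mu"
  proof -
    have "?L * ?mu \<le> 4 * ?L * ?mu"
      using mult_right_mono[of 1 4 "?L * ?mu"] by (simp add: mult.assoc)
    then show ?thesis by (metis add.commute add_mono add_increasing2 zero_le le_add_same_cancel2 order_refl)
  qed
  finally have TB2: "T \<le> 4 * etat M q x0 n k + ?G + 4 * ?L * ?mu" .
  have Csum: "ennreal (2 * exp Z * bb) * T + ennreal (4 * muN) \<le> ennreal (r / 2)"
  proof -
    have "ennreal (2 * exp Z * bb) * T + ennreal (4 * muN) \<le>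
      ennreal (6 * muN) + ennreal (2 * exp Z * bb) * (4 * etat M q x0 n k + ?G + 4 * ?L * ?mu)"
      using TB2 muN0 by (subst add.commute) (intro add_mono mult_left_mono ennreal_leI; simp)
    also have "\<dots> \<le> ennreal (r / 2)" using C unfolding Z_def bb_def s_def muN_def .
    finally show ?thesis .
  qed
  have Tfin: "T \<noteq> \<top>"
  proof
    assume "T = \<top>"
    then have "ennreal (2 * exp Z * bb) * T = \<top>" using bb0 by (simp add: ennreal_mult_eq_top_iff)
    then show False using Csum by (simp add: top_unique)
  qed
  define t where "t = enn2real T"
  have t0: "t \<ge> 0" unfolding t_def by simp
  have Tt: "T = ennreal t" unfolding t_def using Tfin by (simp add: top.not_eq_extremum)
  have real1: "2 * exp Z * bb * t + 4 * muN \<le> r / 2"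
  proof -
    have "ennreal (2 * exp Z * bb * t + 4 * muN) = ennreal (2 * exp Z * bb) * T + ennreal (4 * muN)"
      unfolding Tt using bb0 t0 muN0 by (simp add: ennreal_plus ennreal_mult)
    then have "ennreal (2 * exp Z * bb * t + 4 * muN) \<le> ennreal (r / 2)" using Csum by simp
    then show ?thesis using r by (simp add: ennreal_le_iff)
  qed
  define m where "m = (\<integral>x. h x * cutf x0 n k x \<partial>M)"
  have mb: "\<bar>m\<bar> \<le> c0" unfolding m_def
  proof (rule int_bound_M)
    fix x show "\<bar>h x * cutf x0 n k x\<bar> \<le> c0" using hb[of x] cutf_bounds[of x0 n k x]
      using mult_mono[of "\<bar>h x\<bar>" c0 "\<bar>cutf x0 n k x\<bar>" 1] c0 by (simp add: abs_mult)
  qed measurable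
  define g where "g = (\<lambda>x. h x * cutf x0 n k x - m)"
  have gc: "g \<in> coreA M q" and gb: "\<And>x. \<bar>g x\<bar> \<le> 2 * c0" unfolding g_def using g_core[OF h hb k mb] by auto
  have g0: "(\<integral>x. g x \<partial>M) = 0"
  proof -
    interpret PM: prob_space M by (rule prob_M)
    have "integrable M (\<lambda>x. h x * cutf x0 n k x)"
    proof (rule int_M[where B=c0])
      fix x show "\<bar>h x * cutf x0 n k x\<bar> \<le> c0" using hb[of x] cutf_bounds[of x0 n k x]
        using mult_mono[of "\<bar>h x\<bar>" c0 "\<bar>cutf x0 n k x\<bar>" 1] c0 by (simp add: abs_mult)
    qed measurable
    then show ?thesis unfolding g_def m_def using PM.prob_space by simp
  qed
  have W: "(\<integral>x. (g x)^2 \<partial>M) \<le> bb * energy M q M g + s * (2 * c0)^2"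
    unfolding bb_def by (rule wpi_core[OF gc gb g0 s0])
  have EG: "energy M q M g \<le> 2 * exp (- I) * E + 2 * c0^2 * t"
    unfolding g_def I_def E_def by (rule energy_g[OF h hb n k _ t0 c0]) (use Tt T_def in simp)
  have VS: "(\<integral>x. (h x)^2 \<partial>N) - (\<integral>x. h x \<partial>N)^2 \<le> exp Z * (\<integral>x. (g x)^2 \<partial>M) + 4 * c0^2 * muN"
    unfolding Z_def g_def muN_def by (rule var_split[OF hm hb mb n k])
  have "exp Z * (\<integral>x. (g x)^2 \<partial>M) \<le> exp Z * (bb * (2 * exp (- I) * E + 2 * c0^2 * t) + s * (2 * c0)^2)"
    using W EG bb0 by (intro mult_left_mono) (auto intro: order_trans mult_left_mono)
  also have "\<dots> = 2 * bb * (exp Z * exp (- I)) * E + c0^2 * (2 * exp Z * bb * t) + (exp Z * s) * 4 * c0^2"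
    by (simp add: algebra_simps power2_eq_square)
  also have "exp Z * s = r / 8" unfolding s_def by (simp add: exp_minus field_simps)
  also have "exp Z * exp (- I) = exp (Kt x0 V n k)" unfolding Kt_def Z_def I_def by (simp add: exp_diff exp_minus field_simps)
  finally have X: "exp Z * (\<integral>x. (g x)^2 \<partial>M) \<le> 2 * bb * exp (Kt x0 V n k) * E + c0^2 * (2 * exp Z * bb * t) + r / 8 * 4 * c0^2" .
  have "c0^2 * (2 * exp Z * bb * t) + 4 * c0^2 * muN = c0^2 * (2 * exp Z * bb * t + 4 * muN)" by (simp add: algebra_simps)
  also have "\<dots> \<le> c0^2 * (r / 2)" using real1 by (intro mult_left_mono) auto
  finally have Y: "c0^2 * (2 * exp Z * bb * t) + 4 * c0^2 * muN \<le> c0^2 * (r / 2)" .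
  have "(\<integral>x. (h x)^2 \<partial>N) - (\<integral>x. h x \<partial>N)^2 \<le> 2 * bb * exp (Kt x0 V n k) * E + (c0^2 * (r / 2) + r / 8 * 4 * c0^2)"
    using VS X Y by linarith
  also have "c0^2 * (r / 2) + r / 8 * 4 * c0^2 = r * c0^2" by (simp add: field_simps)
  finally show ?thesis unfolding bb_def s_def Z_def E_def .
qed

end


context setting begin

lemma sq_int_N: fixes u :: "'a \<Rightarrow> real" assumes "integrable N u" "integrable N (\<lambda>x. (u x)^2)"
  shows "(\<integral>x. u x \<partial>N)^2 \<le> (\<integral>x. (u x)^2 \<partial>N)"
proof -
  interpret PN: prob_space N by (rule prob_N)
  define c where "c = (\<integral>x. u x \<partial>N)"
  have "(\<integral>x. (u x - c)^2 \<partial>N) = (\<integral>x. (u x)^2 - 2 * c * u x + c^2 \<partial>N)"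
    by (rule Bochner_Integration.integral_cong) (auto simp: power2_diff algebra_simps)
  also have "\<dots> = (\<integral>x. (u x)^2 \<partial>N) - 2 * c * c + c^2"
    using assms PN.prob_space unfolding c_def by simp
  finally have "(\<integral>x. (u x - c)^2 \<partial>N) = (\<integral>x. (u x)^2 \<partial>N) - c^2" by (simp add: power2_eq_square)
  moreover have "0 \<le> (\<integral>x. (u x - c)^2 \<partial>N)" by simp
  ultimately show ?thesis unfolding c_def by linarith
qed

lemma trunc_bound: "c \<ge> 0 \<Longrightarrow> \<bar>trunc c t\<bar> \<le> c"
  unfolding trunc_def by auto

lemma trunc_id: "\<bar>t\<bar> \<le> c \<Longrightarrow> trunc c t = t"
  unfolding trunc_def by auto

lemma trunc_meas[measurable]: assumes [measurable]: "u \<in> borel_measurable M"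
  shows "(\<lambda>x. trunc c (u x)) \<in> borel_measurable M"
  unfolding trunc_def by measurable

lemma trunc_core: assumes u: "u \<in> coreA M q" and c: "c \<ge> 0"
  shows "(\<lambda>x. trunc c (u x)) \<in> coreA M q"
proof -
  have [measurable]: "u \<in> borel_measurable M" using core_parts[OF u] by auto
  obtain C where C: "\<And>x. Gam M q u x \<le> ennreal C" using core_parts(3)[OF u] by auto
  have "bounded (range (\<lambda>x. trunc c (u x)))" unfolding bounded_iff using trunc_bound[OF c] by auto
  moreover have "Gam M q (\<lambda>x. trunc c (u x)) x \<le> ennreal C" for x
    using Gam_trunc[of c u x] C[of x] by (rule order_trans)
  ultimately show ?thesis unfolding coreA_def by auto
qed

lemma energy_trunc: assumes u: "u \<in> coreA M q" and c: "c \<ge> 0"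
  shows "energy M q N (\<lambda>x. trunc c (u x)) \<le> energy M q N u"
proof -
  have "(\<integral>\<^sup>+x. Gam M q (\<lambda>x. trunc c (u x)) x \<partial>N) \<le> (\<integral>\<^sup>+x. Gam M q u x \<partial>N)"
    by (intro nn_integral_mono Gam_trunc)
  then show ?thesis unfolding energy_def using GamN_fin[OF u] by (intro enn2real_mono) auto
qed

lemma conv_trunc:
  assumes ap: "approx_seq M q N f fs" and fb: "\<And>x. \<bar>f x\<bar> \<le> c0"
  shows "(\<lambda>n. \<integral>x. (trunc c0 (fs n x))^2 \<partial>N) \<longlonglongrightarrow> (\<integral>x. (f x)^2 \<partial>N)"
    "(\<lambda>n. \<integral>x. trunc c0 (fs n x) \<partial>N) \<longlonglongrightarrow> (\<integral>x. f x \<partial>N)"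
proof -
  have c0: "c0 \<ge> 0" using fb[of undefined] by linarith
  have fm[measurable]: "f \<in> borel_measurable M" using ap unfolding approx_seq_def by auto
  have fsc: "fs n \<in> coreA M q" for n using ap unfolding approx_seq_def by auto
  have fsm[measurable]: "fs n \<in> borel_measurable M" for n using core_parts[OF fsc] by auto
  have L2: "(\<lambda>n. \<integral>x. (fs n x - f x)^2 \<partial>N) \<longlonglongrightarrow> 0" using ap unfolding approx_seq_def by auto
  define h where "h n x = trunc c0 (fs n x)" for n x
  have hm[measurable]: "h n \<in> borel_measurable M" for n unfolding h_def by measurable
  have hb: "\<bar>h n x\<bar> \<le> c0" for n x unfolding h_def by (rule trunc_bound[OF c0])
  have hf: "\<bar>h n x - f x\<bar> \<le> \<bar>fs n x - f x\<bar>" for n x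
    using trunc_lip[of c0 "fs n x" "f x"] trunc_id[OF fb[of x]] unfolding h_def by simp
  have hfb: "\<bar>h n x - f x\<bar> \<le> 2 * c0" for n x using hb[of n x] fb[of x] by linarith
  define D where "D n = (\<integral>x. (h n x - f x)^2 \<partial>N)" for n
  have D0: "D \<longlonglongrightarrow> 0"
  proof (rule real_tendsto_sandwich[OF _ _ tendsto_const L2])
    show "\<forall>\<^sub>F n in sequentially. 0 \<le> D n" unfolding D_def by simp
    show "\<forall>\<^sub>F n in sequentially. D n \<le> (\<integral>x. (fs n x - f x)^2 \<partial>N)"
    proof (intro always_eventually allI)
      fix n
      obtain B where B: "\<And>x. \<bar>fs n x\<bar> \<le> B"
        using core_parts(2)[OF fsc[of n]] unfolding bounded_iff by auto
      show "D n \<le> (\<integral>x. (fs n x - f x)^2 \<partial>N)" unfolding D_def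
      proof (rule integral_mono')
        show "integrable N (\<lambda>x. (fs n x - f x)^2)"
        proof (rule int_N[where B="(B + c0)^2"])
          fix x
          have "\<bar>fs n x - f x\<bar> \<le> B + c0" using B[of x] fb[of x] by linarith
          then show "\<bar>(fs n x - f x)^2\<bar> \<le> (B + c0)^2"
            using power_mono[of "\<bar>fs n x - f x\<bar>" "B + c0" 2] by simp
        qed measurable
        fix x show "(h n x - f x)^2 \<le> (fs n x - f x)^2"
          using power_mono[OF hf[of n x] abs_ge_zero, of 2] by simp
      qed simp
    qed
  qed
  define A where "A n = (\<integral>x. \<bar>h n x - f x\<bar> \<partial>N)" for n
  have A0: "A \<longlonglongrightarrow> 0"
  proof (rule real_tendsto_sandwich[OF _ _ tendsto_const])
    show "\<forall>\<^sub>F n in sequentially. 0 \<le> A n" unfolding A_def by simp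
    show "\<forall>\<^sub>F n in sequentially. A n \<le> sqrt (D n)"
    proof (intro always_eventually allI)
      fix n
      have i1: "integrable N (\<lambda>x. \<bar>h n x - f x\<bar>)"
        by (rule int_N[where B="2*c0"]) (use hfb in auto)
      have i2: "integrable N (\<lambda>x. (\<bar>h n x - f x\<bar>)^2)"
      proof (rule int_N[where B="(2*c0)^2"])
        fix x show "\<bar>\<bar>h n x - f x\<bar>^2\<bar> \<le> (2*c0)^2"
          using power_mono[OF hfb[of n x] abs_ge_zero, of 2] by simp
      qed measurable
      have "(A n)^2 \<le> D n" using sq_int_N[OF i1 i2] unfolding A_def D_def by simp
      moreover have "A n \<ge> 0" unfolding A_def by simp
      ultimately show "A n \<le> sqrt (D n)" by (simp add: real_le_rsqrt)
    qed
    show "(\<lambda>n. sqrt (D n)) \<longlonglongrightarrow> 0" using tendsto_real_sqrt[OF D0] by simp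
  qed
  have ih: "integrable N (h n)" for n by (rule int_N[OF hm hb])
  have if1: "integrable N f" by (rule int_N[OF fm fb])
  have ihf: "integrable N (\<lambda>x. h n x - f x)" for n using ih if1 by simp
  show "(\<lambda>n. \<integral>x. trunc c0 (fs n x) \<partial>N) \<longlonglongrightarrow> (\<integral>x. f x \<partial>N)"
  proof (rule LIM_zero_cancel, rule Lim_null_comparison[OF _ A0], intro always_eventually allI)
    fix n
    have "(\<integral>x. trunc c0 (fs n x) \<partial>N) - (\<integral>x. f x \<partial>N) = (\<integral>x. h n x - f x \<partial>N)"
      using ih if1 unfolding h_def by simp
    also have "norm \<dots> \<le> A n" unfolding A_def using integral_norm_bound[of N "\<lambda>x. h n x - f x"] by simp
    finally show "norm ((\<integral>x. trunc c0 (fs n x) \<partial>N) - (\<integral>x. f x \<partial>N)) \<le> A n" by simp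
  qed
  show "(\<lambda>n. \<integral>x. (trunc c0 (fs n x))^2 \<partial>N) \<longlonglongrightarrow> (\<integral>x. (f x)^2 \<partial>N)"
  proof (rule LIM_zero_cancel, rule Lim_null_comparison[where g="\<lambda>n. 2 * c0 * A n"])
    show "(\<lambda>n. 2 * c0 * A n) \<longlonglongrightarrow> 0" using tendsto_mult_right_zero[OF A0] by simp
    show "\<forall>\<^sub>F n in sequentially. norm ((\<integral>x. (trunc c0 (fs n x))^2 \<partial>N) - (\<integral>x. (f x)^2 \<partial>N)) \<le> 2 * c0 * A n"
    proof (intro always_eventually allI)
      fix n
      have ih2: "integrable N (\<lambda>x. (h n x)^2)"
      proof (rule int_N[where B="c0^2"])
        fix x show "\<bar>(h n x)^2\<bar> \<le> c0^2" using power_mono[OF hb[of n x] abs_ge_zero, of 2] by simp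
      qed measurable
      have if2: "integrable N (\<lambda>x. (f x)^2)"
      proof (rule int_N[where B="c0^2"])
        fix x show "\<bar>(f x)^2\<bar> \<le> c0^2" using power_mono[OF fb[of x] abs_ge_zero, of 2] by simp
      qed measurable
      have "(\<integral>x. (trunc c0 (fs n x))^2 \<partial>N) - (\<integral>x. (f x)^2 \<partial>N) = (\<integral>x. (h n x)^2 - (f x)^2 \<partial>N)"
        using ih2 if2 unfolding h_def by simp
      also have "norm \<dots> \<le> (\<integral>x. norm ((h n x)^2 - (f x)^2) \<partial>N)" by (rule integral_norm_bound)
      also have "\<dots> \<le> (\<integral>x. 2 * c0 * \<bar>h n x - f x\<bar> \<partial>N)"
      proof (rule integral_mono')
        show "integrable N (\<lambda>x. 2 * c0 * \<bar>h n x - f x\<bar>)"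
        proof (rule int_N[where B="2*c0*(2*c0)"])
          fix x show "\<bar>2 * c0 * \<bar>h n x - f x\<bar>\<bar> \<le> 2 * c0 * (2 * c0)"
            using mult_left_mono[OF hfb[of n x], of "2*c0"] c0 by simp
        qed measurable
        fix x
        have "\<bar>h n x + f x\<bar> \<le> 2 * c0" using hb[of n x] fb[of x] by linarith
        then have "\<bar>h n x + f x\<bar> * \<bar>h n x - f x\<bar> \<le> 2 * c0 * \<bar>h n x - f x\<bar>"
          by (intro mult_right_mono) auto
        moreover have "(h n x)^2 - (f x)^2 = (h n x + f x) * (h n x - f x)" by (simp add: algebra_simps power2_eq_square)
        ultimately show "norm ((h n x)^2 - (f x)^2) \<le> 2 * c0 * \<bar>h n x - f x\<bar>" by (simp add: abs_mult)
        show "0 \<le> 2 * c0 * \<bar>h n x - f x\<bar>" using c0 by simp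
      qed
      also have "\<dots> = 2 * c0 * A n" unfolding A_def by simp
      finally show "norm ((\<integral>x. (trunc c0 (fs n x))^2 \<partial>N) - (\<integral>x. (f x)^2 \<partial>N)) \<le> 2 * c0 * A n" .
    qed
  qed
qed


lemma Gam_add_bound: assumes [measurable]: "a \<in> borel_measurable M" "b \<in> borel_measurable M"
  shows "Gam M q (\<lambda>x. a x + b x) x \<le> 2 * Gam M q a x + 2 * Gam M q b x"
proof -
  have "Gam M q (\<lambda>x. a x + b x) x \<le> (\<integral>\<^sup>+y. 2 * ennreal ((a x - a y)^2 * q x y) + 2 * ennreal ((b x - b y)^2 * q x y) \<partial>M)"
    unfolding Gam_def
  proof (rule nn_integral_mono)
    fix y
    have "(a x + b x - (a y + b y))^2 * q x y \<le> (2 * (a x - a y)^2 + 2 * (b x - b y)^2) * q x y"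
      using sq_sum_le[of "a x - a y" "b x - b y"] q_nonneg[of x y]
      by (intro mult_right_mono) (auto simp: algebra_simps)
    then have "ennreal ((a x + b x - (a y + b y))^2 * q x y) \<le> ennreal (2 * ((a x - a y)^2 * q x y) + 2 * ((b x - b y)^2 * q x y))"
      by (intro ennreal_leI) (simp add: algebra_simps)
    also have "\<dots> = 2 * ennreal ((a x - a y)^2 * q x y) + 2 * ennreal ((b x - b y)^2 * q x y)"
      using q_nonneg[of x y] by (simp add: ennreal_plus ennreal_mult)
    finally show "ennreal ((a x + b x - (a y + b y))^2 * q x y) \<le> \<dots>" .
  qed
  also have "\<dots> = (\<integral>\<^sup>+y. 2 * ennreal ((a x - a y)^2 * q x y) \<partial>M) + (\<integral>\<^sup>+y. 2 * ennreal ((b x - b y)^2 * q x y) \<partial>M)"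
    by (rule nn_integral_add) measurable
  also have "\<dots> = 2 * Gam M q a x + 2 * Gam M q b x"
    unfolding Gam_def by (simp add: nn_integral_cmult)
  finally show ?thesis .
qed

lemma Gam_uminus: "Gam M q (\<lambda>x. - v x) = Gam M q v"
  unfolding Gam_def by (intro ext) (simp add: power2_commute algebra_simps)

lemma core_add: assumes u: "u \<in> coreA M q" and v: "v \<in> coreA M q"
  shows "(\<lambda>x. u x + v x) \<in> coreA M q"
proof -
  have [measurable]: "u \<in> borel_measurable M" "v \<in> borel_measurable M" using core_parts u v by auto
  obtain C1 where C1: "C1 \<ge> 0" "\<And>x. Gam M q u x \<le> ennreal C1" using core_parts(3)[OF u] by auto
  obtain C2 where C2: "C2 \<ge> 0" "\<And>x. Gam M q v x \<le> ennreal C2" using core_parts(3)[OF v] by auto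
  obtain B1 where B1: "\<And>x. \<bar>u x\<bar> \<le> B1" using core_parts(2)[OF u] unfolding bounded_iff by auto
  obtain B2 where B2: "\<And>x. \<bar>v x\<bar> \<le> B2" using core_parts(2)[OF v] unfolding bounded_iff by auto
  have "bounded (range (\<lambda>x. u x + v x))" unfolding bounded_iff
    using B1 B2 by (intro exI[of _ "B1 + B2"]) (auto intro: order_trans[OF abs_triangle_ineq] add_mono)
  moreover have "Gam M q (\<lambda>x. u x + v x) x \<le> ennreal (2 * C1 + 2 * C2)" for x
  proof -
    have "Gam M q (\<lambda>x. u x + v x) x \<le> 2 * Gam M q u x + 2 * Gam M q v x" by (rule Gam_add_bound) measurable
    also have "\<dots> \<le> 2 * ennreal C1 + 2 * ennreal C2" using C1 C2 by (intro add_mono mult_left_mono) auto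
    also have "\<dots> = ennreal (2 * C1 + 2 * C2)" using C1 C2 by (simp add: ennreal_plus ennreal_mult)
    finally show ?thesis .
  qed
  ultimately show ?thesis unfolding coreA_def by auto
qed

lemma core_uminus: assumes v: "v \<in> coreA M q" shows "(\<lambda>x. - v x) \<in> coreA M q"
proof -
  have [measurable]: "v \<in> borel_measurable M" using core_parts v by auto
  have "bounded (range (\<lambda>x. - v x))" using core_parts(2)[OF v] unfolding bounded_iff by auto
  then show ?thesis using v unfolding coreA_def by (auto simp: Gam_uminus)
qed

lemma core_diff: "u \<in> coreA M q \<Longrightarrow> v \<in> coreA M q \<Longrightarrow> (\<lambda>x. u x - v x) \<in> coreA M q"
  using core_add[OF _ core_uminus, of u v] by simp

lemma energy_add: assumes u: "u \<in> coreA M q" and v: "v \<in> coreA M q"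
  shows "energy M q N (\<lambda>x. u x + v x) \<le> 2 * energy M q N u + 2 * energy M q N v"
proof -
  have [measurable]: "u \<in> borel_measurable M" "v \<in> borel_measurable M" using core_parts u v by auto
  have "(\<integral>\<^sup>+x. Gam M q (\<lambda>x. u x + v x) x \<partial>N) \<le> (\<integral>\<^sup>+x. 2 * Gam M q u x + 2 * Gam M q v x \<partial>N)"
    by (intro nn_integral_mono Gam_add_bound) measurable
  also have "\<dots> = (\<integral>\<^sup>+x. 2 * Gam M q u x \<partial>N) + (\<integral>\<^sup>+x. 2 * Gam M q v x \<partial>N)"
    by (rule nn_integral_add) measurable
  also have "\<dots> = 2 * (\<integral>\<^sup>+x. Gam M q u x \<partial>N) + 2 * (\<integral>\<^sup>+x. Gam M q v x \<partial>N)"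
    by (simp add: nn_integral_cmult)
  also have "\<dots> = ennreal (2 * energy M q N u + 2 * energy M q N v)"
    using GamN_fin[OF u] GamN_fin[OF v] energy_nonneg[of N u] energy_nonneg[of N v]
    by (simp add: ennreal_plus ennreal_mult)
  finally show ?thesis unfolding energy_def
    by (rule enn2real_leI[rotated]) (use energy_nonneg[of N u] energy_nonneg[of N v] in simp)
qed

lemma good_seq: assumes ap: "approx_seq M q N f fs"
  shows "\<exists>gs e. approx_seq M q N f gs \<and> (\<lambda>n. energy M q N (gs n)) \<longlonglongrightarrow> e"
proof -
  have fsc: "fs n \<in> coreA M q" for n using ap unfolding approx_seq_def by auto
  obtain N0 where N0: "\<And>m n. m \<ge> N0 \<Longrightarrow> n \<ge> N0 \<Longrightarrow> energy M q N (\<lambda>x. fs m x - fs n x) < 1"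
    using ap unfolding approx_seq_def by (meson zero_less_one)
  define E where "E n = energy M q N (fs n)" for n
  define Bd where "Bd = (\<Sum>i\<le>N0. E i) + 2 * E N0 + 2"
  have E0: "E n \<ge> 0" for n unfolding E_def by (rule energy_nonneg)
  have EB: "\<bar>E n\<bar> \<le> Bd" for n
  proof (cases "n \<le> N0")
    case True
    then have "E n \<le> (\<Sum>i\<le>N0. E i)" using E0 by (intro member_le_sum) auto
    then show ?thesis unfolding Bd_def using E0[of n] E0[of N0] by simp
  next
    case False
    have "E n = energy M q N (\<lambda>x. fs N0 x + (fs n x - fs N0 x))" unfolding E_def by simp
    also have "\<dots> \<le> 2 * E N0 + 2 * energy M q N (\<lambda>x. fs n x - fs N0 x)"
      unfolding E_def by (rule energy_add[OF fsc core_diff[OF fsc fsc]])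
    also have "\<dots> \<le> 2 * E N0 + 2" using N0[of n N0] False by simp
    finally show ?thesis unfolding Bd_def using E0[of n] sum_nonneg[of "{..N0}" E] E0 by simp
  qed
  obtain \<sigma> where \<sigma>: "strict_mono \<sigma>" "monoseq (\<lambda>n. E (\<sigma> n))" using seq_monosub by blast
  have "Bseq (\<lambda>n. E (\<sigma> n))" by (rule BseqI'[where K=Bd]) (use EB in simp)
  then have "convergent (\<lambda>n. E (\<sigma> n))" using \<sigma>(2) by (rule Bseq_monoseq_convergent)
  then obtain e where e: "(\<lambda>n. E (\<sigma> n)) \<longlonglongrightarrow> e" by (auto simp: convergent_def)
  have "approx_seq M q N f (\<lambda>n. fs (\<sigma> n))"
    unfolding approx_seq_def
  proof (intro conjI allI impI)
    show "fs (\<sigma> n) \<in> coreA M q" for n by (rule fsc)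
    show "f \<in> borel_measurable N" "integrable N (\<lambda>x. (f x)^2)" using ap unfolding approx_seq_def by auto
    have "(\<lambda>n. \<integral>x. (fs n x - f x)^2 \<partial>N) \<longlonglongrightarrow> 0" using ap unfolding approx_seq_def by auto
    from LIMSEQ_subseq_LIMSEQ[OF this \<sigma>(1)]
    show "(\<lambda>n. \<integral>x. (fs (\<sigma> n) x - f x)^2 \<partial>N) \<longlonglongrightarrow> 0" by (simp add: o_def)
    fix \<epsilon> :: real assume "\<epsilon> > 0"
    then obtain N1 where N1: "\<And>m n. m \<ge> N1 \<Longrightarrow> n \<ge> N1 \<Longrightarrow> energy M q N (\<lambda>x. fs m x - fs n x) < \<epsilon>"
      using ap unfolding approx_seq_def by meson
    show "\<exists>N0. \<forall>m\<ge>N0. \<forall>n\<ge>N0. energy M q N (\<lambda>x. fs (\<sigma> m) x - fs (\<sigma> n) x) < \<epsilon>"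
      using N1 seq_suble[OF \<sigma>(1)] by (meson order_trans)
  qed
  then show ?thesis using e unfolding E_def by blast
qed


lemma bounded_sup_norm: assumes "bounded (range f)" shows "\<bar>f x\<bar> \<le> sup_norm f"
proof -
  obtain B where B: "\<And>x. \<bar>f x\<bar> \<le> B" using assms unfolding bounded_iff by auto
  show ?thesis unfolding sup_norm_def by (rule cSUP_upper) (use B in \<open>auto simp: bdd_above_def\<close>)
qed

lemma main_ineq:
  assumes r: "r > 0" and b: "b \<in> betaV_set M q x0 V \<beta> r"
    and ap: "approx_seq M q N f fs" and e: "(\<lambda>n. energy M q N (fs n)) \<longlonglongrightarrow> e"
    and fb: "bounded (range f)" and f0: "(\<integral>x. f x \<partial>N) = 0"
  shows "(\<integral>x. (f x)^2 \<partial>N) \<le> b * e + r * (sup_norm f)^2"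
proof -
  obtain n k where nk: "n \<ge> 1" "k \<ge> 1" and bdef: "b = 2 * \<beta> (r / 8 * exp (- Zt x0 V n)) * exp (Kt x0 V n k)"
    and C: "ennreal (6 * measure N {x. dist x0 x > real n})
        + ennreal (2 * exp (Zt x0 V n) * \<beta> (r / 8 * exp (- Zt x0 V n)))
          * (4 * etat M q x0 n k + gammat M q k
             + 4 * lam M q * ennreal (measure M {x. dist x0 x > real n - real k}))
        \<le> ennreal (r / 2)"
    using b unfolding betaV_set_def by blast
  have b0: "b \<ge> 0" unfolding bdef using \<beta>_pos[of "r / 8 * exp (- Zt x0 V n)"] r by simp
  define c0 where "c0 = sup_norm f"
  have fb': "\<And>x. \<bar>f x\<bar> \<le> c0" unfolding c0_def by (rule bounded_sup_norm[OF fb])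
  have c0: "c0 \<ge> 0" using fb'[of undefined] by linarith
  have fsc: "fs n \<in> coreA M q" for n using ap unfolding approx_seq_def by auto
  define h where "h n x = trunc c0 (fs n x)" for n x
  have hc: "h i \<in> coreA M q" for i unfolding h_def by (rule trunc_core[OF fsc c0])
  have hb: "\<bar>h i x\<bar> \<le> c0" for i x unfolding h_def by (rule trunc_bound[OF c0])
  have le: "(\<integral>x. (h i x)^2 \<partial>N) - (\<integral>x. h i x \<partial>N)^2 \<le> b * energy M q N (fs i) + r * c0^2" for i
  proof -
    have "(\<integral>x. (h i x)^2 \<partial>N) - (\<integral>x. h i x \<partial>N)^2 \<le> b * energy M q N (h i) + r * c0^2"
      unfolding bdef by (rule core_var[OF hc hb r nk C])
    also have "\<dots> \<le> b * energy M q N (fs i) + r * c0^2"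
      using energy_trunc[OF fsc c0, of i] b0 unfolding h_def by (intro add_right_mono mult_left_mono) auto
    finally show ?thesis .
  qed
  have l1: "(\<lambda>i. (\<integral>x. (h i x)^2 \<partial>N) - (\<integral>x. h i x \<partial>N)^2) \<longlonglongrightarrow> (\<integral>x. (f x)^2 \<partial>N) - (\<integral>x. f x \<partial>N)^2"
    using conv_trunc[OF ap fb'] unfolding h_def by (intro tendsto_intros) auto
  have l2: "(\<lambda>i. b * energy M q N (fs i) + r * c0^2) \<longlonglongrightarrow> b * e + r * c0^2"
    using e by (intro tendsto_intros)
  have "(\<integral>x. (f x)^2 \<partial>N) - (\<integral>x. f x \<partial>N)^2 \<le> b * e + r * c0^2"
    by (rule LIMSEQ_le[OF l1 l2]) (use le in auto)
  then show ?thesis using f0 unfolding c0_def by simp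
qed


lemma betaset_pos: "r > 0 \<Longrightarrow> b \<in> betaV_set M q x0 V \<beta> r \<Longrightarrow> b > 0"
  unfolding betaV_set_def using \<beta>_pos by auto

lemma wpi_V: assumes ne: "\<And>r. r > 0 \<Longrightarrow> betaV_set M q x0 V \<beta> r \<noteq> {}"
  shows "weak_poincare M q N (betaV M q x0 V \<beta>)"
  unfolding weak_poincare_def
proof (intro allI impI ballI)
  fix r :: real and f assume r: "r > 0" and fd: "f \<in> form_dom M q N"
    and fb: "bounded (range f)" and f0: "(\<integral>x. f x \<partial>N) = 0"
  define S where "S = {e. \<exists>fs. approx_seq M q N f fs \<and> (\<lambda>n. energy M q N (fs n)) \<longlonglongrightarrow> e}"
  define F where "F = form_val M q N f"
  have FS: "F = Inf S" unfolding F_def S_def form_val_def ..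
  have Sne: "S \<noteq> {}" using fd good_seq unfolding S_def form_dom_def by blast
  have S0: "e \<ge> 0" if "e \<in> S" for e
    using that unfolding S_def by (auto intro!: LIMSEQ_le_const simp: energy_nonneg)
  have F0: "F \<ge> 0" unfolding FS by (rule cInf_greatest[OF Sne S0])
  let ?R = "(\<integral>x. (f x)^2 \<partial>N) - r * (sup_norm f)^2"
  have bF: "?R \<le> b * F" if b: "b \<in> betaV_set M q x0 V \<beta> r" for b
  proof -
    have bp: "b > 0" by (rule betaset_pos[OF r b])
    have "?R / b \<le> e" if eS: "e \<in> S" for e
    proof -
      obtain fs where "approx_seq M q N f fs" "(\<lambda>n. energy M q N (fs n)) \<longlonglongrightarrow> e"
        using eS unfolding S_def by auto
      from main_ineq[OF r b this fb f0] have "?R \<le> b * e" by simp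
      then show ?thesis using bp by (simp add: divide_le_eq mult.commute)
    qed
    then have "?R / b \<le> F" unfolding FS by (intro cInf_greatest[OF Sne])
    then show ?thesis using bp by (simp add: divide_le_eq mult.commute)
  qed
  have "?R \<le> betaV M q x0 V \<beta> r * F"
  proof (cases "F = 0")
    case True
    obtain b where "b \<in> betaV_set M q x0 V \<beta> r" using ne[OF r] by auto
    then show ?thesis using bF True by force
  next
    case False
    then have Fp: "F > 0" using F0 by simp
    have "?R / F \<le> b" if "b \<in> betaV_set M q x0 V \<beta> r" for b
      using bF[OF that] Fp by (simp add: divide_le_eq)
    then have "?R / F \<le> betaV M q x0 V \<beta> r" unfolding betaV_def
      by (intro cInf_greatest[OF ne[OF r]])
    then show ?thesis using Fp by (simp add: divide_le_eq)
  qed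
  then show "(\<integral>x. (f x)^2 \<partial>N) \<le> betaV M q x0 V \<beta> r * form_val M q N f + r * (sup_norm f)^2"
    unfolding F_def by simp
qed

end


context setting begin

lemma Z_mono: assumes "n \<ge> 1" shows "Zt x0 V 1 \<le> Zt x0 V n"
  unfolding Zt_def
proof (rule cSUP_subset_mono)
  show "{x. dist x0 x \<le> real 1} \<noteq> {}" by (auto intro: exI[of _ x0])
  show "bdd_above (V ` {x. dist x0 x \<le> real n})" using assms by (intro V_bdd) simp
  show "{x. dist x0 x \<le> real 1} \<subseteq> {x. dist x0 x \<le> real n}" using assms by auto
qed simp

lemma coef_lower: assumes n: "n \<ge> 1" and e: "\<epsilon> > 0"
  shows "exp (Zt x0 V 1) * \<beta> (\<epsilon> * exp (- Zt x0 V 1)) \<le> exp (Zt x0 V n) * \<beta> (\<epsilon> * exp (- Zt x0 V n))"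
proof (rule mult_mono)
  have Z: "Zt x0 V 1 \<le> Zt x0 V n" by (rule Z_mono[OF n])
  then show "exp (Zt x0 V 1) \<le> exp (Zt x0 V n)" by simp
  show "\<beta> (\<epsilon> * exp (- Zt x0 V 1)) \<le> \<beta> (\<epsilon> * exp (- Zt x0 V n))"
    using Z e by (intro \<beta>_decr) (auto intro: mult_left_mono)
  show "0 \<le> \<beta> (\<epsilon> * exp (- Zt x0 V 1))" using \<beta>_pos[of "\<epsilon> * exp (- Zt x0 V 1)"] e by simp
qed simp

lemma measN_tail: "\<exists>t. measure N {x. V x > t} < d" if d: "d > 0"
proof -
  interpret PN: prob_space N by (rule prob_N)
  define A where "A j = {x. V x > real j}" for j :: nat
  have "(\<lambda>j. measure N (A j)) \<longlonglongrightarrow> measure N (\<Inter>j. A j)"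
  proof (rule PN.finite_Lim_measure_decseq)
    show "range A \<subseteq> PN.events" unfolding A_def using V_meas by auto
    show "decseq A" unfolding A_def decseq_def by auto
  qed
  moreover have "(\<Inter>j. A j) = {}" unfolding A_def
  proof (safe)
    fix x assume "x \<in> (\<Inter>j. {x. V x > real j})"
    moreover obtain j :: nat where "V x < real j" using reals_Archimedean2 by blast
    ultimately show "x \<in> {}" by (metis (mono_tags, lifting) INT_E UNIV_I less_asym mem_Collect_eq)
  qed
  ultimately have "(\<lambda>j. measure N (A j)) \<longlonglongrightarrow> 0" by simp
  from LIMSEQ_D[OF this d] obtain j where "norm (measure N (A j) - 0) < d" by blast
  then have "measure N (A j) < d" by simp
  then show ?thesis unfolding A_def by blast
qed

lemma measN_le: assumes A: "A \<in> sets M"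
  shows "measure N A \<le> exp t * measure M A + measure N {x. V x > t}"
proof -
  interpret PN: prob_space N by (rule prob_N)
  interpret PM: prob_space M by (rule prob_M)
  have [measurable]: "V \<in> borel_measurable M" by (rule V_meas)
  have s2: "{x. V x > t} \<in> sets M" by measurable
  have s3: "{x. V x \<le> t} \<in> sets M" by measurable
  have sets1: "A \<inter> {x. V x \<le> t} \<in> sets M" by (rule sets.Int[OF A s3])
  note sets = sets1 s2
  have m1: "measure N A \<le> measure N ((A \<inter> {x. V x \<le> t}) \<union> {x. V x > t})"
  proof (rule PN.finite_measure_mono)
    show "(A \<inter> {x. V x \<le> t}) \<union> {x. V x > t} \<in> sets N"
      using sets.Un[OF sets1 s2] by (simp only: sets_density)
    show "A \<subseteq> (A \<inter> {x. V x \<le> t}) \<union> {x. V x > t}" by (auto simp: not_le)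
  qed
  have m2: "measure N ((A \<inter> {x. V x \<le> t}) \<union> {x. V x > t}) \<le> measure N (A \<inter> {x. V x \<le> t}) + measure N {x. V x > t}"
  proof (rule measure_Un_le)
    show "A \<inter> {x. V x \<le> t} \<in> sets N" using sets1 by (simp only: sets_density)
    show "{x. V x > t} \<in> sets N" using s2 by (simp only: sets_density)
  qed
  have iA: "integrable M (\<lambda>x. exp t * indicator A x :: real)"
    using integrable_real_mult_indicator[OF A, of "\<lambda>_. exp t"] by (simp add: mult.commute)
  have "measure N (A \<inter> {x. V x \<le> t}) = (\<integral>x. exp (V x) * indicator (A \<inter> {x. V x \<le> t}) x \<partial>M)"
    by (rule measN_eq[OF sets(1)])
  also have "\<dots> \<le> (\<integral>x. exp t * indicator A x \<partial>M)"
  proof (rule integral_mono'[OF iA])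
    fix x show "0 \<le> exp t * indicator A x" by simp
    show "exp (V x) * indicator (A \<inter> {x. V x \<le> t}) x \<le> exp t * indicator A x"
      by (cases "x \<in> A \<and> V x \<le> t") (auto simp: indicator_def)
  qed
  also have "(\<integral>x. exp t * indicator A x \<partial>M) = exp t * measure M A"
    using Bochner_Integration.integral_indicator[of M A] by simp
  finally have m3: "measure N (A \<inter> {x. V x \<le> t}) \<le> exp t * measure M A" .
  from m1 m2 m3 show ?thesis by linarith
qed


lemma betaset_ne:
  assumes r: "r > 0"
  and infc: "(INF nk\<in>{(n, k). n \<ge> (1::nat) \<and> k \<ge> (1::nat)}.
          ennreal (exp (Zt x0 V (fst nk)) * \<beta> (r / 8 * exp (- Zt x0 V (fst nk))))
          * (etat M q x0 (fst nk) (snd nk) + gammat M q (snd nk)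
             + ennreal (measure M {x. dist x0 x > real (fst nk) - real (snd nk)}))) = 0"
  shows "betaV_set M q x0 V \<beta> r \<noteq> {}"
proof -
  define \<epsilon> where "\<epsilon> = r / 8"
  have \<epsilon>: "\<epsilon> > 0" unfolding \<epsilon>_def using r by simp
  define c where "c = exp (Zt x0 V 1) * \<beta> (\<epsilon> * exp (- Zt x0 V 1))"
  have c: "c > 0" unfolding c_def using \<beta>_pos[of "\<epsilon> * exp (- Zt x0 V 1)"] \<epsilon> by simp
  obtain L where L: "L \<ge> 0" "lam M q = ennreal L" using lamL by auto
  obtain t where t: "measure N {x. V x > t} < r / 48" using measN_tail[of "r / 48"] r by auto
  define \<delta>1 where "\<delta>1 = c * (r / 48) / exp t"
  define \<delta>2 where "\<delta>2 = r / (32 * (L + 1))"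
  define \<delta> where "\<delta> = min \<delta>1 \<delta>2"
  have \<delta>: "\<delta> > 0" unfolding \<delta>_def \<delta>1_def \<delta>2_def using c r L by auto
  let ?F = "\<lambda>nk. ennreal (exp (Zt x0 V (fst nk)) * \<beta> (r / 8 * exp (- Zt x0 V (fst nk))))
          * (etat M q x0 (fst nk) (snd nk) + gammat M q (snd nk)
             + ennreal (measure M {x. dist x0 x > real (fst nk) - real (snd nk)}))"
  have "(INF nk\<in>{(n, k). n \<ge> (1::nat) \<and> k \<ge> (1::nat)}. ?F nk) < ennreal \<delta>"
    using infc \<delta> by simp
  then obtain nk where nk: "nk \<in> {(n, k). n \<ge> (1::nat) \<and> k \<ge> (1::nat)}" and Flt: "?F nk < ennreal \<delta>"
    by (auto simp: INF_less_iff)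
  obtain n k where nkd: "nk = (n, k)" by (cases nk)
  have n: "n \<ge> 1" and k: "k \<ge> 1" using nk nkd by auto
  define a where "a = exp (Zt x0 V n) * \<beta> (r / 8 * exp (- Zt x0 V n))"
  define \<mu> where "\<mu> = measure M {x. dist x0 x > real n - real k}"
  define \<eta> where "\<eta> = etat M q x0 n k"
  define \<gamma> where "\<gamma> = gammat M q k"
  have \<mu>0: "\<mu> \<ge> 0" unfolding \<mu>_def by simp
  have ca: "c \<le> a" unfolding a_def c_def \<epsilon>_def by (rule coef_lower[OF n]) (use r in simp)
  have F: "ennreal a * (\<eta> + \<gamma> + ennreal \<mu>) \<le> ennreal \<delta>"
    using Flt nkd unfolding a_def \<eta>_def \<gamma>_def \<mu>_def by simp
  have "ennreal (c * \<mu>) \<le> ennreal a * (\<eta> + \<gamma> + ennreal \<mu>)"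
  proof -
    have "ennreal (c * \<mu>) = ennreal c * ennreal \<mu>" using c \<mu>0 by (simp add: ennreal_mult)
    also have "\<dots> \<le> ennreal a * (\<eta> + \<gamma> + ennreal \<mu>)"
      using ca by (intro mult_mono) (auto intro: ennreal_leI)
    finally show ?thesis .
  qed
  then have "ennreal (c * \<mu>) \<le> ennreal \<delta>" using F by (rule order_trans)
  then have "c * \<mu> \<le> \<delta>" using \<delta> by (simp add: ennreal_le_iff)
  also have "\<delta> \<le> \<delta>1" unfolding \<delta>_def by simp
  finally have "c * \<mu> \<le> c * (r / 48) / exp t" unfolding \<delta>1_def .
  then have "\<mu> * exp t \<le> r / 48" using c by (simp add: field_simps)
  then have mu_small: "exp t * \<mu> \<le> r / 48" by (simp add: mult.commute)
  have tailN: "6 * measure N {x. dist x0 x > real n} \<le> r / 4"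
  proof -
    have sA: "{x. dist x0 x > real n} \<in> sets M" by measurable
    have sB: "{x. dist x0 x > real n - real k} \<in> sets M" by measurable
    interpret PM: prob_space M by (rule prob_M)
    have "measure M {x. dist x0 x > real n} \<le> \<mu>" unfolding \<mu>_def
      by (rule PM.finite_measure_mono) (use sB in auto)
    then have "exp t * measure M {x. dist x0 x > real n} \<le> exp t * \<mu>" by simp
    moreover have "measure N {x. dist x0 x > real n} \<le> exp t * measure M {x. dist x0 x > real n} + measure N {x. V x > t}"
      by (rule measN_le[OF sA])
    ultimately show ?thesis using mu_small t by linarith
  qed
  have a0: "a \<ge> 0" using ca c by simp
  have "4 * \<eta> + \<gamma> + 4 * lam M q * ennreal \<mu> \<le> ennreal (4 * (L + 1)) * (\<eta> + \<gamma> + ennreal \<mu>)"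
  proof -
    have e1: "4 * \<eta> \<le> ennreal (4 * (L + 1)) * \<eta>"
    proof -
      have "(4::ennreal) = ennreal 4" by simp
      also have "\<dots> \<le> ennreal (4 * (L + 1))" using L by (intro ennreal_leI) simp
      finally show ?thesis by (intro mult_right_mono) auto
    qed
    have e2: "\<gamma> \<le> ennreal (4 * (L + 1)) * \<gamma>"
    proof -
      have "ennreal 1 \<le> ennreal (4 * (L + 1))" using L by (intro ennreal_leI) simp
      then have "(1::ennreal) \<le> ennreal (4 * (L + 1))" by simp
      then show ?thesis using mult_right_mono[of 1 "ennreal (4 * (L + 1))" \<gamma>] by simp
    qed
    have e3: "4 * lam M q * ennreal \<mu> \<le> ennreal (4 * (L + 1)) * ennreal \<mu>"
    proof -
      have "4 * lam M q * ennreal \<mu> = ennreal (4 * L * \<mu>)" using L \<mu>0 by (simp add: ennreal_mult)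
      also have "\<dots> \<le> ennreal (4 * (L + 1) * \<mu>)" using L \<mu>0 by (intro ennreal_leI mult_right_mono) auto
      also have "\<dots> = ennreal (4 * (L + 1)) * ennreal \<mu>" using L \<mu>0 by (simp add: ennreal_mult)
      finally show ?thesis .
    qed
    have "4 * \<eta> + \<gamma> + 4 * lam M q * ennreal \<mu> \<le>
       ennreal (4 * (L + 1)) * \<eta> + ennreal (4 * (L + 1)) * \<gamma> + ennreal (4 * (L + 1)) * ennreal \<mu>"
      using e1 e2 e3 by (intro add_mono) auto
    also have "\<dots> = ennreal (4 * (L + 1)) * (\<eta> + \<gamma> + ennreal \<mu>)" by (simp add: distrib_left)
    finally show ?thesis .
  qed
  then have "ennreal (2 * a) * (4 * \<eta> + \<gamma> + 4 * lam M q * ennreal \<mu>)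
      \<le> ennreal (2 * a) * (ennreal (4 * (L + 1)) * (\<eta> + \<gamma> + ennreal \<mu>))"
    by (rule mult_left_mono) simp
  also have "\<dots> = ennreal (8 * (L + 1)) * (ennreal a * (\<eta> + \<gamma> + ennreal \<mu>))"
    using a0 L by (simp add: ennreal_mult[symmetric] mult.assoc[symmetric]) (simp add: ennreal_mult mult_ac)
  also have "\<dots> \<le> ennreal (8 * (L + 1)) * ennreal \<delta>2"
  proof (rule mult_left_mono)
    show "ennreal a * (\<eta> + \<gamma> + ennreal \<mu>) \<le> ennreal \<delta>2"
      using F by (rule order_trans) (auto simp: \<delta>_def intro: ennreal_leI)
  qed simp
  also have "\<dots> = ennreal (r / 4)"
  proof -
    have "ennreal (8 * (L + 1)) * ennreal \<delta>2 = ennreal (8 * (L + 1) * \<delta>2)"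
      unfolding \<delta>2_def using L r by (intro ennreal_mult[symmetric]) auto
    also have "8 * (L + 1) * \<delta>2 = r / 4" unfolding \<delta>2_def using L by (simp add: field_simps)
    finally show ?thesis .
  qed
  finally have X: "ennreal (2 * a) * (4 * \<eta> + \<gamma> + 4 * lam M q * ennreal \<mu>) \<le> ennreal (r / 4)" .
  have cond: "ennreal (6 * measure N {x. dist x0 x > real n})
        + ennreal (2 * exp (Zt x0 V n) * \<beta> (r / 8 * exp (- Zt x0 V n)))
          * (4 * etat M q x0 n k + gammat M q k
             + 4 * lam M q * ennreal (measure M {x. dist x0 x > real n - real k}))
        \<le> ennreal (r / 2)"
  proof -
    have "ennreal (6 * measure N {x. dist x0 x > real n}) \<le> ennreal (r / 4)"
      using tailN by (rule ennreal_leI)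
    then have "ennreal (6 * measure N {x. dist x0 x > real n})
        + ennreal (2 * a) * (4 * \<eta> + \<gamma> + 4 * lam M q * ennreal \<mu>) \<le> ennreal (r / 4) + ennreal (r / 4)"
      using X by (rule add_mono)
    also have "\<dots> = ennreal (r / 2)" using r by (simp add: ennreal_plus[symmetric])
    finally show ?thesis unfolding a_def \<eta>_def \<gamma>_def \<mu>_def by (simp add: mult.assoc)
  qed
  have "2 * \<beta> (r / 8 * exp (- Zt x0 V n)) * exp (Kt x0 V n k) \<in> betaV_set M q x0 V \<beta> r"
    unfolding betaV_set_def using n k cond by blast
  then show ?thesis by blast
qed

end

theorem theorem3p1:
  fixes M :: "'a::polish_space measure"
    and q :: "'a \<Rightarrow> 'a \<Rightarrow> real"
    and x0 :: 'a
    and V :: "'a \<Rightarrow> real"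
    and \<beta> :: "real \<Rightarrow> real"
  assumes M_borel: "sets M = sets borel"
    and M_prob: "prob_space M"
    and q_meas: "(\<lambda>(x, y). q x y) \<in> borel_measurable (M \<Otimes>\<^sub>M M)"
    and q_nonneg: "\<And>x y. q x y \<ge> 0"
    and q_diag: "\<And>x. q x x = 0"
    and lam_fin: "lam M q < \<infinity>"
    and A_dense: "\<And>f e. f \<in> borel_measurable M \<Longrightarrow> integrable M (\<lambda>x. (f x)^2) \<Longrightarrow> e > 0 \<Longrightarrow>
                    \<exists>g\<in>coreA M q. (\<integral>x. (f x - g x)^2 \<partial>M) < e"
    and V_meas: "V \<in> borel_measurable M"
    and V_loc_bdd: "\<And>r. r > 0 \<Longrightarrow> \<exists>C. \<forall>x. dist x0 x \<le> r \<longrightarrow> \<bar>V x\<bar> \<le> C"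
    and V_norm: "(\<integral>\<^sup>+ x. ennreal (exp (V x)) \<partial>M) = 1"
    and \<beta>_pos: "\<And>r. r > 0 \<Longrightarrow> \<beta> r > 0"
    and \<beta>_decr: "\<And>s t. 0 < s \<Longrightarrow> s \<le> t \<Longrightarrow> \<beta> t \<le> \<beta> s"
    and WPI: "weak_poincare M q M \<beta>"
    and inf_cond: "\<And>\<epsilon>. \<epsilon> > 0 \<Longrightarrow>
       (INF nk\<in>{(n, k). n \<ge> (1::nat) \<and> k \<ge> (1::nat)}.
          ennreal (exp (Zt x0 V (fst nk)) * \<beta> (\<epsilon> * exp (- Zt x0 V (fst nk))))
          * (etat M q x0 (fst nk) (snd nk) + gammat M q (snd nk)
             + ennreal (measure M {x. dist x0 x > real (fst nk) - real (snd nk)}))) = 0"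
  shows "weak_poincare M q (density M (\<lambda>x. ennreal (exp (V x)))) (betaV M q x0 V \<beta>)
         \<and> (\<forall>r>0. betaV_set M q x0 V \<beta> r \<noteq> {})"
  proof -
  interpret S: setting M q x0 V \<beta>
    by (rule setting.intro) (use assms in auto)
  have ne: "\<And>r. r > 0 \<Longrightarrow> betaV_set M q x0 V \<beta> r \<noteq> {}"
  proof -
    fix r :: real assume r: "r > 0"
    then have "r / 8 > 0" by simp
    from inf_cond[OF this] show "betaV_set M q x0 V \<beta> r \<noteq> {}" by (rule S.betaset_ne[OF r])
  qed
  show ?thesis using S.wpi_V[OF ne] ne by blast
qed

end
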